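(* Suppose $E_S$ carries an $S[T;f]$-module structure for which $E_S$ is $T$-torsion-free (i.e., $Tm=0$ implies $m=0$). Then an ideal $L\subseteq R$ containing $I$ is an $E_S$-ideal if and only if $LS$ is an $E_S$-special ideal of $S$.
   Context: Let $p$ be a prime, $(R,\mathfrak m)$ a complete regular local ring of characteristic $p$, $E$ the injective hull of $R/\mathfrak m$. Fix an ideal $I\subseteq R$, $S=R/I$, $E_S=\operatorname{Ann}_EI$. $S[T;f]$ is the skew polynomial ring $\bigoplus_iST^i$ with $Ts=s^pT$. An ideal $L\subseteq R$ is an $E_S$-ideal if $I\subseteq L$ and $\operatorname{Ann}_{E_S}L$ is an $S[T;f]$-submodule of $E_S$. A graded two-sided ideal of $S[T;f]$ is one of the form $\bigoplus_iK_iT^i$ with $K_i$ ideals of $S$. For an $S[T;f]$-module $G$ and submodule $M$, $\operatorname{grAnn}M$ is the largest graded two-sided ideal contained in $\operatorname{Ann}_{S[T;f]}M$. An ideal $L'\subseteq S$ is $G$-special if $L'S[T;f]=\operatorname{grAnn}M$ for some $S[T;f]$-submodule $M\subseteq G$. *)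

theory Defs
  imports Main "HOL.Modules" "HOL-Computational_Algebra.Primes"
begin

definition is_ideal :: "'a::comm_ring_1 set \<Rightarrow> bool" where
  "is_ideal J \<longleftrightarrow> 0 \<in> J \<and> (\<forall>x\<in>J. \<forall>y\<in>J. x + y \<in> J) \<and> (\<forall>r x. x \<in> J \<longrightarrow> r * x \<in> J)"

definition ideal_gen :: "'a::comm_ring_1 set \<Rightarrow> 'a set" where
  "ideal_gen F = \<Inter>{J. is_ideal J \<and> F \<subseteq> J}"

definition is_maximal_ideal :: "'a::comm_ring_1 set \<Rightarrow> bool" where
  "is_maximal_ideal M \<longleftrightarrow> is_ideal M \<and> M \<noteq> UNIV \<and>
     (\<forall>J. is_ideal J \<and> M \<subseteq> J \<longrightarrow> J = M \<or> J = UNIV)"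

definition is_prime_ideal :: "'a::comm_ring_1 set \<Rightarrow> bool" where
  "is_prime_ideal P \<longleftrightarrow> is_ideal P \<and> P \<noteq> UNIV \<and> (\<forall>a b. a * b \<in> P \<longrightarrow> a \<in> P \<or> b \<in> P)"

definition local_ring_with :: "'a::comm_ring_1 set \<Rightarrow> bool" where
  "local_ring_with m \<longleftrightarrow> is_maximal_ideal m \<and> (\<forall>M. is_maximal_ideal M \<longrightarrow> M = m)"

definition noetherian_ring :: "'a::comm_ring_1 itself \<Rightarrow> bool" where
  "noetherian_ring _ \<longleftrightarrow> (\<forall>J::'a set. is_ideal J \<longrightarrow> (\<exists>F. finite F \<and> J = ideal_gen F))"

definition prime_chain :: "(nat \<Rightarrow> 'a::comm_ring_1 set) \<Rightarrow> nat \<Rightarrow> bool" where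
  "prime_chain P d \<longleftrightarrow> (\<forall>i\<le>d. is_prime_ideal (P i)) \<and> (\<forall>i<d. P i \<subset> P (Suc i))"

definition krull_dim_eq :: "'a::comm_ring_1 itself \<Rightarrow> nat \<Rightarrow> bool" where
  "krull_dim_eq _ d \<longleftrightarrow> (\<exists>P::nat \<Rightarrow> 'a set. prime_chain P d) \<and>
      \<not> (\<exists>P::nat \<Rightarrow> 'a set. prime_chain P (Suc d))"

definition regular_local_with :: "'a::comm_ring_1 set \<Rightarrow> bool" where
  "regular_local_with m \<longleftrightarrow> local_ring_with m \<and> noetherian_ring TYPE('a) \<and>
     (\<exists>d. krull_dim_eq TYPE('a) d \<and> (\<exists>F. finite F \<and> card F = d \<and> m = ideal_gen F))"

definition ideal_pow :: "'a::comm_ring_1 set \<Rightarrow> nat \<Rightarrow> 'a set" where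
  "ideal_pow J k = ideal_gen {prod_list xs | xs. length xs = k \<and> set xs \<subseteq> J}"

definition madic_complete :: "'a::comm_ring_1 set \<Rightarrow> bool" where
  "madic_complete m \<longleftrightarrow>
     (\<Inter>k. ideal_pow m k) = {0} \<and>
     (\<forall>x::nat \<Rightarrow> 'a. (\<forall>k. \<exists>N. \<forall>n\<ge>N. \<forall>n'\<ge>N. x n - x n' \<in> ideal_pow m k) \<longrightarrow>
        (\<exists>y. \<forall>k. \<exists>N. \<forall>n\<ge>N. x n - y \<in> ideal_pow m k))"

definition complete_regular_local_with :: "'a::comm_ring_1 set \<Rightarrow> bool" where
  "complete_regular_local_with m \<longleftrightarrow> regular_local_with m \<and> madic_complete m"

definition submod :: "('a::comm_ring_1 \<Rightarrow> 'e::ab_group_add \<Rightarrow> 'e) \<Rightarrow> 'e set \<Rightarrow> bool" where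
  "submod sc N \<longleftrightarrow> 0 \<in> N \<and> (\<forall>x\<in>N. \<forall>y\<in>N. x + y \<in> N) \<and> (\<forall>r. \<forall>x\<in>N. sc r x \<in> N)"

text \<open>Injectivity (via Baer's criterion).\<close>
definition injective_mod :: "('a::comm_ring_1 \<Rightarrow> 'e::ab_group_add \<Rightarrow> 'e) \<Rightarrow> bool" where
  "injective_mod sc \<longleftrightarrow>
     (\<forall>J g. is_ideal J \<and> (\<forall>x\<in>J. \<forall>y\<in>J. g (x + y) = g x + g y) \<and> (\<forall>r. \<forall>x\<in>J. g (r * x) = sc r (g x))
        \<longrightarrow> (\<exists>e. \<forall>x\<in>J. g x = sc x e))"

text \<open>E is an injective hull of R/m: E injective, and R/m embeds (as the cyclic submodule
  generated by some u with annihilator m) as an essential submodule.\<close>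
definition injective_hull_residue :: "('a::comm_ring_1 \<Rightarrow> 'e::ab_group_add \<Rightarrow> 'e) \<Rightarrow> 'a set \<Rightarrow> bool" where
  "injective_hull_residue sc m \<longleftrightarrow> module sc \<and> injective_mod sc \<and>
     (\<exists>u. {r. sc r u = 0} = m \<and>
        (\<forall>N. submod sc N \<and> N \<noteq> {0} \<longrightarrow> N \<inter> range (\<lambda>r. sc r u) \<noteq> {0}))"

text \<open>S is presented as a ring with a surjective ring hom pi : R \<rightarrow> S with kernel I.\<close>
definition quotient_map :: "('a::comm_ring_1 \<Rightarrow> 's::comm_ring_1) \<Rightarrow> 'a set \<Rightarrow> bool" where
  "quotient_map \<pi> I \<longleftrightarrow> (\<forall>a b. \<pi> (a + b) = \<pi> a + \<pi> b) \<and> (\<forall>a b. \<pi> (a * b) = \<pi> a * \<pi> b)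
     \<and> \<pi> 1 = 1 \<and> surj \<pi> \<and> {r. \<pi> r = 0} = I"

definition annE :: "('a::comm_ring_1 \<Rightarrow> 'e::ab_group_add \<Rightarrow> 'e) \<Rightarrow> 'a set \<Rightarrow> 'e set" where
  "annE sc J = {e. \<forall>j\<in>J. sc j e = 0}"

definition ES :: "('a::comm_ring_1 \<Rightarrow> 'e::ab_group_add \<Rightarrow> 'e) \<Rightarrow> 'a set \<Rightarrow> 'e set" where
  "ES sc I = annE sc I"

definition annES :: "('a::comm_ring_1 \<Rightarrow> 'e::ab_group_add \<Rightarrow> 'e) \<Rightarrow> 'a set \<Rightarrow> 'a set \<Rightarrow> 'e set" where
  "annES sc I L = ES sc I \<inter> annE sc L"

definition sactS :: "('a::comm_ring_1 \<Rightarrow> 's::comm_ring_1) \<Rightarrow> ('a \<Rightarrow> 'e::ab_group_add \<Rightarrow> 'e) \<Rightarrow> 's \<Rightarrow> 'e \<Rightarrow> 'e" where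
  "sactS \<pi> sc s e = sc (SOME r. \<pi> r = s) e"

text \<open>An S[T;f]-module structure on E_S extending its S-module structure is given by
  an additive Frobenius-semilinear map T: E_S \<rightarrow> E_S (action of the variable T).\<close>
definition frob_structure :: "nat \<Rightarrow> ('a::comm_ring_1 \<Rightarrow> 'e::ab_group_add \<Rightarrow> 'e) \<Rightarrow> 'a set \<Rightarrow> ('e \<Rightarrow> 'e) \<Rightarrow> bool" where
  "frob_structure p sc I T \<longleftrightarrow> (\<forall>e\<in>ES sc I. T e \<in> ES sc I) \<and>
     (\<forall>x\<in>ES sc I. \<forall>y\<in>ES sc I. T (x + y) = T x + T y) \<and>
     (\<forall>r. \<forall>e\<in>ES sc I. T (sc r e) = sc (r ^ p) (T e))"

definition T_torsion_free :: "('a::comm_ring_1 \<Rightarrow> 'e::ab_group_add \<Rightarrow> 'e) \<Rightarrow> 'a set \<Rightarrow> ('e \<Rightarrow> 'e) \<Rightarrow> bool" where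
  "T_torsion_free sc I T \<longleftrightarrow> (\<forall>e\<in>ES sc I. T e = 0 \<longrightarrow> e = 0)"

definition skew_submod :: "('a::comm_ring_1 \<Rightarrow> 'e::ab_group_add \<Rightarrow> 'e) \<Rightarrow> 'a set \<Rightarrow> ('e \<Rightarrow> 'e) \<Rightarrow> 'e set \<Rightarrow> bool" where
  "skew_submod sc I T M \<longleftrightarrow> M \<subseteq> ES sc I \<and> submod sc M \<and> (\<forall>e\<in>M. T e \<in> M)"

definition ES_ideal :: "('a::comm_ring_1 \<Rightarrow> 'e::ab_group_add \<Rightarrow> 'e) \<Rightarrow> 'a set \<Rightarrow> ('e \<Rightarrow> 'e) \<Rightarrow> 'a set \<Rightarrow> bool" where
  "ES_ideal sc I T L \<longleftrightarrow> is_ideal L \<and> I \<subseteq> L \<and> skew_submod sc I T (annES sc I L)"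

text \<open>Elements of S[T;f]: finitely supported coefficient sequences (f i is the
  coefficient of T^i).  Multiplication uses T s = s^p T.\<close>
definition skew_elt :: "(nat \<Rightarrow> 's::comm_ring_1) \<Rightarrow> bool" where
  "skew_elt f \<longleftrightarrow> finite {i. f i \<noteq> 0}"

definition skew_mult :: "nat \<Rightarrow> (nat \<Rightarrow> 's::comm_ring_1) \<Rightarrow> (nat \<Rightarrow> 's) \<Rightarrow> nat \<Rightarrow> 's" where
  "skew_mult p f g n = (\<Sum>i\<le>n. f i * (g (n - i)) ^ (p ^ i))"

definition skew_act :: "('a::comm_ring_1 \<Rightarrow> 's::comm_ring_1) \<Rightarrow> ('a \<Rightarrow> 'e::ab_group_add \<Rightarrow> 'e) \<Rightarrow> ('e \<Rightarrow> 'e)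
     \<Rightarrow> (nat \<Rightarrow> 's) \<Rightarrow> 'e \<Rightarrow> 'e" where
  "skew_act \<pi> sc T f e = (\<Sum>i\<in>{i. f i \<noteq> 0}. sactS \<pi> sc (f i) ((T ^^ i) e))"

definition skew_ann :: "('a::comm_ring_1 \<Rightarrow> 's::comm_ring_1) \<Rightarrow> ('a \<Rightarrow> 'e::ab_group_add \<Rightarrow> 'e) \<Rightarrow> ('e \<Rightarrow> 'e)
     \<Rightarrow> 'e set \<Rightarrow> (nat \<Rightarrow> 's) set" where
  "skew_ann \<pi> sc T M = {f. skew_elt f \<and> (\<forall>e\<in>M. skew_act \<pi> sc T f e = 0)}"

definition skew_two_sided_ideal :: "nat \<Rightarrow> (nat \<Rightarrow> 's::comm_ring_1) set \<Rightarrow> bool" where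
  "skew_two_sided_ideal p A \<longleftrightarrow> (\<forall>f\<in>A. skew_elt f) \<and> (\<lambda>_. 0) \<in> A \<and>
     (\<forall>f\<in>A. \<forall>g\<in>A. (\<lambda>i. f i + g i) \<in> A) \<and>
     (\<forall>f\<in>A. \<forall>g. skew_elt g \<longrightarrow> skew_mult p g f \<in> A \<and> skew_mult p f g \<in> A)"

definition graded_two_sided_ideal :: "nat \<Rightarrow> (nat \<Rightarrow> 's::comm_ring_1) set \<Rightarrow> bool" where
  "graded_two_sided_ideal p A \<longleftrightarrow> skew_two_sided_ideal p A \<and>
     (\<exists>K. (\<forall>i. is_ideal (K i)) \<and> A = {f. skew_elt f \<and> (\<forall>i. f i \<in> K i)})"

definition grAnn :: "nat \<Rightarrow> ('a::comm_ring_1 \<Rightarrow> 's::comm_ring_1) \<Rightarrow> ('a \<Rightarrow> 'e::ab_group_add \<Rightarrow> 'e) \<Rightarrow> ('e \<Rightarrow> 'e)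
     \<Rightarrow> 'e set \<Rightarrow> (nat \<Rightarrow> 's) set" where
  "grAnn p \<pi> sc T M = (THE A. graded_two_sided_ideal p A \<and> A \<subseteq> skew_ann \<pi> sc T M \<and>
       (\<forall>B. graded_two_sided_ideal p B \<and> B \<subseteq> skew_ann \<pi> sc T M \<longrightarrow> B \<subseteq> A))"

text \<open>L' S[T;f] = \<Oplus>_i L' T^i.\<close>
definition ext_ideal :: "'s::comm_ring_1 set \<Rightarrow> (nat \<Rightarrow> 's) set" where
  "ext_ideal L' = {f. skew_elt f \<and> (\<forall>i. f i \<in> L')}"

definition ES_special :: "nat \<Rightarrow> ('a::comm_ring_1 \<Rightarrow> 's::comm_ring_1) \<Rightarrow> ('a \<Rightarrow> 'e::ab_group_add \<Rightarrow> 'e) \<Rightarrow> 'a set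
     \<Rightarrow> ('e \<Rightarrow> 'e) \<Rightarrow> 's set \<Rightarrow> bool" where
  "ES_special p \<pi> sc I T L' \<longleftrightarrow> is_ideal L' \<and>
     (\<exists>M. skew_submod sc I T M \<and> ext_ideal L' = grAnn p \<pi> sc T M)"

end

theory Submission
  imports Defs "HOL-Library.Function_Algebras"
begin

definition msum :: "'v::ab_group_add set \<Rightarrow> 'v set \<Rightarrow> 'v set" where
  "msum A B = {x + y | x y. x \<in> A \<and> y \<in> B}"

definition schain :: "('r::comm_ring_1 \<Rightarrow> 'v::ab_group_add \<Rightarrow> 'v) \<Rightarrow> 'v set \<Rightarrow> 'v set \<Rightarrow> nat \<Rightarrow> (nat \<Rightarrow> 'v set) \<Rightarrow> bool" where
  "schain sc A B n c \<longleftrightarrow> c 0 = A \<and> c n = B \<and> (\<forall>i<n. c i \<subset> c (Suc i)) \<and> (\<forall>i\<le>n. submod sc (c i))"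

definition bnd :: "('r::comm_ring_1 \<Rightarrow> 'v::ab_group_add \<Rightarrow> 'v) \<Rightarrow> 'v set \<Rightarrow> 'v set \<Rightarrow> nat \<Rightarrow> bool" where
  "bnd sc A B p \<longleftrightarrow> (\<forall>n c. schain sc A B n c \<longrightarrow> n \<le> p)"

lemma schain_mono: "schain sc A B n c \<Longrightarrow> i \<le> j \<Longrightarrow> j \<le> n \<Longrightarrow> c i \<subseteq> c j"
proof (induction j)
  case 0 then show ?case by simp
next
  case (Suc j)
  show ?case
  proof (cases "i = Suc j")
    case True then show ?thesis by simp
  next
    case False
    then have "c i \<subseteq> c j" using Suc by simp
    moreover have "c j \<subset> c (Suc j)" using Suc.prems unfolding schain_def by simp
    ultimately show ?thesis by blast
  qed
qed

lemma schain_strict: "schain sc A B n c \<Longrightarrow> i < j \<Longrightarrow> j \<le> n \<Longrightarrow> c i \<subset> c j"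
proof -
  assume h: "schain sc A B n c" "i < j" "j \<le> n"
  then obtain j' where j': "j = Suc j'" by (cases j) auto
  have "c i \<subseteq> c j'" using schain_mono[OF h(1)] h j' by simp
  moreover have "c j' \<subset> c j" using h j' unfolding schain_def by simp
  ultimately show ?thesis by blast
qed

lemma schain_in: "schain sc A B n c \<Longrightarrow> i \<le> n \<Longrightarrow> A \<subseteq> c i \<and> c i \<subseteq> B"
  using schain_mono[of sc A B n c 0 i] schain_mono[of sc A B n c i n] unfolding schain_def by auto

lemma schain_sub: "schain sc A B n c \<Longrightarrow> A \<subseteq> B"
  using schain_in[of sc A B n c 0] by blast

lemma schain_submod: "schain sc A B n c \<Longrightarrow> submod sc A \<and> submod sc B"
  unfolding schain_def by (metis le0 order_refl)

lemma schain0: "submod sc A \<Longrightarrow> schain sc A A 0 (\<lambda>_. A)"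
  unfolding schain_def by simp

lemma schain1: "submod sc A \<Longrightarrow> submod sc B \<Longrightarrow> A \<subset> B \<Longrightarrow> schain sc A B 1 (\<lambda>i. if i = 0 then A else B)"
  unfolding schain_def by auto

lemma schain_append:
  assumes "schain sc A B n c" "schain sc B C k d"
  shows "schain sc A C (n + k) (\<lambda>i. if i \<le> n then c i else d (i - n))"
  unfolding schain_def
proof (intro conjI allI impI)
  show "(if 0 \<le> n then c 0 else d (0 - n)) = A" using assms unfolding schain_def by simp
  show "(if n + k \<le> n then c (n + k) else d (n + k - n)) = C"
    using assms unfolding schain_def by auto
  fix i assume i: "i < n + k"
  show "(if i \<le> n then c i else d (i - n)) \<subset> (if Suc i \<le> n then c (Suc i) else d (Suc i - n))"
  proof (cases "Suc i \<le> n")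
    case True then show ?thesis using assms i unfolding schain_def by auto
  next
    case False
    then have "i \<ge> n" by simp
    show ?thesis
    proof (cases "i = n")
      case True
      then have "c i = d 0" using assms unfolding schain_def by simp
      moreover have "0 < k" using i True by simp
      moreover have "\<forall>i<k. d i \<subset> d (Suc i)" using assms(2) unfolding schain_def by simp
      ultimately have "d 0 \<subset> d 1" by simp
      then show ?thesis using True \<open>c i = d 0\<close> by simp
    next
      case False
      then have "i > n" using \<open>i \<ge> n\<close> by simp
      have "d (i - n) \<subset> d (Suc (i - n))" using assms i \<open>i > n\<close> unfolding schain_def by simp
      moreover have "Suc i - n = Suc (i - n)" using \<open>i > n\<close> by simp
      ultimately show ?thesis using \<open>i > n\<close> by simp
    qed
  qed
next
  fix i assume i: "i \<le> n + k"
  show "submod sc (if i \<le> n then c i else d (i - n))"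
    using assms i unfolding schain_def by auto
qed

lemma schain_tl:
  assumes "schain sc A C (Suc n) c"
  shows "schain sc (c 1) C n (\<lambda>i. c (Suc i))"
  using assms unfolding schain_def by auto

lemma schain_exists:
  assumes "submod sc A" "submod sc B" "A \<subseteq> B"
  shows "\<exists>n c. schain sc A B n c"
proof (cases "A = B")
  case True then show ?thesis using schain0[OF assms(1)] by blast
next
  case False then show ?thesis using schain1[OF assms(1,2)] assms(3) by blast
qed

lemma bnd_prefix:
  assumes "bnd sc A C p" "submod sc A" "A \<subset> B" "schain sc B C n d"
  shows "Suc n \<le> p"
proof -
  have "submod sc B" using schain_submod[OF assms(4)] by simp
  from schain_append[OF schain1[OF assms(2) this assms(3)] assms(4)]
  show ?thesis using assms(1) unfolding bnd_def by fastforce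
qed

lemma bnd_suffix:
  assumes "bnd sc A C p" "submod sc C" "B \<subset> C" "schain sc A B n d"
  shows "Suc n \<le> p"
proof -
  have "submod sc B" using schain_submod[OF assms(4)] by simp
  from schain_append[OF assms(4) schain1[OF this assms(2) assms(3)]]
  show ?thesis using assms(1) unfolding bnd_def by fastforce
qed

lemma bnd_sub:
  assumes "bnd sc A C p" "submod sc A" "submod sc C" "A \<subseteq> A'" "B' \<subseteq> C"
  shows "bnd sc A' B' p"
  unfolding bnd_def
proof (intro allI impI)
  fix n d assume d: "schain sc A' B' n d"
  have sA': "submod sc A'" and sB': "submod sc B'" using schain_submod[OF d] by auto
  obtain n1 c1 where c1: "schain sc A A' n1 c1" using schain_exists[OF assms(2) sA' assms(4)] by blast
  obtain n2 c2 where c2: "schain sc B' C n2 c2" using schain_exists[OF sB' assms(3) assms(5)] by blast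
  from schain_append[OF schain_append[OF c1 d] c2]
  show "n \<le> p" using assms(1) unfolding bnd_def by fastforce
qed

lemma bnd_max_chain:
  assumes "bnd sc A B p" "submod sc A" "submod sc B" "A \<subseteq> B"
  shows "\<exists>n c. schain sc A B n c \<and> bnd sc A B n"
proof -
  let ?S = "{n. \<exists>c. schain sc A B n c}"
  have ne: "?S \<noteq> {}" using schain_exists[OF assms(2-4)] by blast
  have "?S \<subseteq> {..p}" using assms(1) unfolding bnd_def by blast
  then have fin: "finite ?S" by (rule finite_subset) simp
  let ?n = "Max ?S"
  have "?n \<in> ?S" using Max_in[OF fin ne] .
  moreover have "bnd sc A B ?n" unfolding bnd_def using Max_ge[OF fin] by blast
  ultimately show ?thesis by blast
qed

lemma schain_map:
  assumes c: "schain scA A B n c"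
    and sub: "\<And>X. submod scA X \<Longrightarrow> A \<subseteq> X \<Longrightarrow> X \<subseteq> B \<Longrightarrow> submod scB (f X)"
    and strict: "\<And>X Y. submod scA X \<Longrightarrow> submod scA Y \<Longrightarrow> A \<subseteq> X \<Longrightarrow> Y \<subseteq> B \<Longrightarrow> X \<subset> Y \<Longrightarrow> f X \<subset> f Y"
  shows "schain scB (f A) (f B) n (\<lambda>i. f (c i))"
  unfolding schain_def
proof (intro conjI allI impI)
  show "f (c 0) = f A" "f (c n) = f B" using c unfolding schain_def by auto
  fix i assume i: "i < n"
  show "f (c i) \<subset> f (c (Suc i))"
    using strict[of "c i" "c (Suc i)"] c i schain_in[OF c, of i] schain_in[OF c, of "Suc i"]
    unfolding schain_def by auto
next
  fix i assume i: "i \<le> n"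
  show "submod scB (f (c i))" using sub[of "c i"] c i schain_in[OF c, of i] unfolding schain_def by auto
qed

lemma bnd_map:
  assumes b: "bnd scB (f A) (f B) p"
    and sub: "\<And>X. submod scA X \<Longrightarrow> A \<subseteq> X \<Longrightarrow> X \<subseteq> B \<Longrightarrow> submod scB (f X)"
    and strict: "\<And>X Y. submod scA X \<Longrightarrow> submod scA Y \<Longrightarrow> A \<subseteq> X \<Longrightarrow> Y \<subseteq> B \<Longrightarrow> X \<subset> Y \<Longrightarrow> f X \<subset> f Y"
  shows "bnd scA A B p"
  unfolding bnd_def
proof (intro allI impI)
  fix n c assume "schain scA A B n c"
  from schain_map[of scA A B n c scB f, OF this sub strict] b show "n \<le> p" unfolding bnd_def by blast
qed

lemma submod_diff:
  assumes "module sc" "submod sc N" "x \<in> N" "y \<in> N"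
  shows "x - y \<in> N"
proof -
  have "sc (-1) y \<in> N" using assms unfolding submod_def by blast
  moreover have "sc (-1) y = - y" using module.scale_minus_left[OF assms(1), of 1 y] module.scale_one[OF assms(1)] by simp
  ultimately have "x + - y \<in> N" using assms unfolding submod_def by metis
  then show ?thesis by simp
qed

lemma submod_Int: "submod sc A \<Longrightarrow> submod sc B \<Longrightarrow> submod sc (A \<inter> B)"
  unfolding submod_def by blast

lemma submod_msum:
  assumes "module sc" "submod sc A" "submod sc B"
  shows "submod sc (msum A B)"
proof -
  have z: "0 \<in> msum A B"
  proof -
    have "0 \<in> A" "0 \<in> B" using assms unfolding submod_def by auto
    then have "0 + 0 \<in> msum A B" unfolding msum_def by blast
    then show ?thesis by simp
  qed
  have a: "\<forall>u\<in>msum A B. \<forall>v\<in>msum A B. u + v \<in> msum A B"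
  proof (intro ballI)
    fix u v assume "u \<in> msum A B" "v \<in> msum A B"
    then obtain a b a' b' where h: "u = a + b" "v = a' + b'" "a \<in> A" "b \<in> B" "a' \<in> A" "b' \<in> B"
      unfolding msum_def by blast
    have "a + a' \<in> A" using h assms(2) unfolding submod_def by blast
    moreover have "b + b' \<in> B" using h assms(3) unfolding submod_def by blast
    moreover have "u + v = (a + a') + (b + b')" using h by (simp add: algebra_simps)
    ultimately show "u + v \<in> msum A B" unfolding msum_def by blast
  qed
  have s: "\<forall>r. \<forall>u\<in>msum A B. sc r u \<in> msum A B"
  proof (intro allI ballI)
    fix r u assume "u \<in> msum A B"
    then obtain a b where h: "u = a + b" "a \<in> A" "b \<in> B" unfolding msum_def by blast
    have "sc r a \<in> A" using h assms(2) unfolding submod_def by blast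
    moreover have "sc r b \<in> B" using h assms(3) unfolding submod_def by blast
    moreover have "sc r u = sc r a + sc r b" using h module.scale_right_distrib[OF assms(1)] by simp
    ultimately show "sc r u \<in> msum A B" unfolding msum_def by blast
  qed
  show ?thesis unfolding submod_def using z a s by blast
qed

lemma msum_sub: "submod sc C \<Longrightarrow> A \<subseteq> C \<Longrightarrow> B \<subseteq> C \<Longrightarrow> msum A B \<subseteq> C"
  unfolding msum_def submod_def by blast

lemma msum_ge1: "submod sc B \<Longrightarrow> A \<subseteq> msum A B"
  unfolding msum_def submod_def by force

lemma msum_ge2: "submod sc A \<Longrightarrow> B \<subseteq> msum A B"
  unfolding msum_def submod_def by force

lemma modular_strict:
  assumes "module sc" "submod sc X" "submod sc Y" "submod sc B" "C1 \<subseteq> X" "X \<subset> Y" "Y \<subseteq> msum C1 B"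
  shows "X \<inter> B \<subset> Y \<inter> B"
proof (rule ccontr)
  assume "\<not> X \<inter> B \<subset> Y \<inter> B"
  then have eq: "Y \<inter> B \<subseteq> X" using assms(6) by blast
  have "Y \<subseteq> X"
  proof
    fix y assume y: "y \<in> Y"
    then obtain c b where cb: "y = c + b" "c \<in> C1" "b \<in> B" using assms(7) unfolding msum_def by blast
    have "c \<in> Y" using cb assms(5,6) by blast
    then have "b \<in> Y" using submod_diff[OF assms(1,3) y \<open>c \<in> Y\<close>] cb by simp
    then have "b \<in> X" using eq cb by blast
    moreover have "c \<in> X" using cb assms(5) by blast
    ultimately show "y \<in> X" using cb assms(2) unfolding submod_def by blast
  qed
  then show False using assms(6) by blast
qed

lemma bnd_subadd:
  assumes "module sc"
  shows "schain sc A C n c \<Longrightarrow> submod sc B \<Longrightarrow> A \<subseteq> B \<Longrightarrow> B \<subseteq> C \<Longrightarrow> bnd sc A B p \<Longrightarrow> bnd sc B C q \<Longrightarrow> n \<le> p + q"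
proof (induction n arbitrary: A c B p q)
  case 0 then show ?case by simp
next
  case (Suc n)
  note ch = Suc.prems(1)
  have sA: "submod sc A" and sC: "submod sc C" using schain_submod[OF ch] by auto
  define c1 where "c1 = c 1"
  have scA: "submod sc c1" using ch unfolding schain_def c1_def by auto
  have Ac1: "A \<subset> c1" using ch unfolding schain_def c1_def by auto
  have c1C: "c1 \<subseteq> C" using schain_in[OF ch, of 1] c1_def by simp
  define B' where "B' = msum c1 B"
  have sB': "submod sc B'" using submod_msum[OF assms scA Suc.prems(2)] B'_def by simp
  have c1B': "c1 \<subseteq> B'" using msum_ge1[OF Suc.prems(2)] B'_def by simp
  have BB': "B \<subseteq> B'" using msum_ge2[OF scA] B'_def by simp
  have B'C: "B' \<subseteq> C" using msum_sub[OF sC c1C Suc.prems(4)] B'_def by simp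
  have tl: "schain sc c1 C n (\<lambda>i. c (Suc i))" using schain_tl[OF ch] c1_def by simp
  define p' where "p' = (if A \<subset> c1 \<inter> B then p - 1 else p)"
  define q' where "q' = (if B \<subset> B' then q - 1 else q)"
  have bq': "bnd sc B' C q'"
  proof (cases "B \<subset> B'")
    case True
    show ?thesis unfolding bnd_def q'_def
    proof (intro allI impI)
      fix k d assume "schain sc B' C k d"
      then have "Suc k \<le> q" by (rule bnd_prefix[OF Suc.prems(6) Suc.prems(2) True])
      then show "k \<le> (if B \<subset> B' then q - 1 else q)" using True by simp
    qed
  next
    case False then have "B' = B" using BB' by blast
    then show ?thesis using Suc.prems(6) q'_def False by simp
  qed
  have bp0: "bnd sc (c1 \<inter> B) B p'"
  proof (cases "A \<subset> c1 \<inter> B")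
    case True
    show ?thesis unfolding bnd_def p'_def
    proof (intro allI impI)
      fix k d assume "schain sc (c1 \<inter> B) B k d"
      then have "Suc k \<le> p" by (rule bnd_prefix[OF Suc.prems(5) sA True])
      then show "k \<le> (if A \<subset> c1 \<inter> B then p - 1 else p)" using True by simp
    qed
  next
    case False then have "c1 \<inter> B = A" using Ac1 Suc.prems(3) by blast
    then show ?thesis using Suc.prems(5) p'_def False by simp
  qed
  have bp': "bnd sc c1 B' p'"
  proof (rule bnd_map[where f = "\<lambda>X. X \<inter> B" and scB = sc])
    show "bnd sc (c1 \<inter> B) (B' \<inter> B) p'" using bp0 BB' by (simp add: Int_absorb1)
    show "\<And>X. submod sc X \<Longrightarrow> c1 \<subseteq> X \<Longrightarrow> X \<subseteq> B' \<Longrightarrow> submod sc (X \<inter> B)"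
      by (rule submod_Int[OF _ Suc.prems(2)])
    fix X Y assume h: "submod sc X" "submod sc Y" "c1 \<subseteq> X" "Y \<subseteq> B'" "X \<subset> Y"
    show "X \<inter> B \<subset> Y \<inter> B"
      by (rule modular_strict[OF assms h(1) h(2) Suc.prems(2) h(3) h(5)]) (use h(4) B'_def in simp)
  qed
  have IH: "n \<le> p' + q'" using Suc.IH[OF tl sB' c1B' B'C bp' bq'] .
  have one: "A \<subset> c1 \<inter> B \<or> B \<subset> B'"
  proof (rule ccontr)
    assume "\<not> (A \<subset> c1 \<inter> B \<or> B \<subset> B')"
    then have n1: "\<not> A \<subset> c1 \<inter> B" and n2: "\<not> B \<subset> B'" by auto
    have "A \<subseteq> c1 \<inter> B" using Ac1 Suc.prems(3) by blast
    then have "c1 \<inter> B = A" using n1 by blast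
    have "B' = B" using BB' n2 by blast
    then have "c1 \<subseteq> B" using c1B' by simp
    then show False using \<open>c1 \<inter> B = A\<close> Ac1 by blast
  qed
  have p1: "1 \<le> p" if "A \<subset> c1 \<inter> B"
  proof -
    have "A \<subset> B" using that by blast
    then show ?thesis using bnd_prefix[OF Suc.prems(5) sA _ schain0[OF Suc.prems(2)]] by simp
  qed
  have q1: "1 \<le> q" if "B \<subset> B'"
  proof -
    have "B \<subset> C" using that B'C by blast
    then show ?thesis using bnd_suffix[OF Suc.prems(6) sC _ schain0[OF Suc.prems(2)]] by simp
  qed
  have F1: "p' + q' + 1 \<le> p + q"
  proof (cases "A \<subset> c1 \<inter> B")
    case True
    then have "p' = p - 1" "1 \<le> p" using p1 p'_def by auto
    moreover have "q' \<le> q" unfolding q'_def by simp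
    ultimately show ?thesis by linarith
  next
    case False
    then have "B \<subset> B'" using one by blast
    then have "q' = q - 1" "1 \<le> q" using q1 q'_def by auto
    moreover have "p' = p" using False p'_def by simp
    ultimately show ?thesis by linarith
  qed
  have F2: "Suc n \<le> p' + q' + 1" using IH by simp
  show ?case by (rule order_trans[OF F2 F1])
qed

lemma bnd_add:
  assumes "module sc" "submod sc B" "A \<subseteq> B" "B \<subseteq> C" "bnd sc A B p" "bnd sc B C q"
  shows "bnd sc A C (p + q)"
  unfolding bnd_def
proof (intro allI impI)
  fix n c assume "schain sc A C n c"
  then show "n \<le> p + q" by (rule bnd_subadd[OF assms(1) _ assms(2-6)])
qed

lemma module_mult: "module ((*) :: 'a::comm_ring_1 \<Rightarrow> 'a \<Rightarrow> 'a)"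
  by standard (simp_all add: algebra_simps)

lemma is_ideal_submod: "is_ideal J \<longleftrightarrow> submod (*) J"
  unfolding is_ideal_def submod_def by blast

lemma ideal_0: "is_ideal J \<Longrightarrow> 0 \<in> J" unfolding is_ideal_def by blast
lemma ideal_add: "is_ideal J \<Longrightarrow> x \<in> J \<Longrightarrow> y \<in> J \<Longrightarrow> x + y \<in> J" unfolding is_ideal_def by blast
lemma ideal_mult: "is_ideal J \<Longrightarrow> x \<in> J \<Longrightarrow> r * x \<in> J" unfolding is_ideal_def by blast
lemma ideal_mult2: "is_ideal J \<Longrightarrow> x \<in> J \<Longrightarrow> x * r \<in> J"
  using ideal_mult[of J x r] by (simp add: mult.commute)
lemma ideal_uminus: "is_ideal J \<Longrightarrow> x \<in> J \<Longrightarrow> - x \<in> J"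
  using ideal_mult[of J x "-1"] by simp
lemma ideal_diff: "is_ideal J \<Longrightarrow> x \<in> J \<Longrightarrow> y \<in> J \<Longrightarrow> x - y \<in> J"
  using ideal_add[of J x "-y"] ideal_uminus[of J y] by simp
lemma ideal_sum: "is_ideal J \<Longrightarrow> (\<And>i. i \<in> S \<Longrightarrow> f i \<in> J) \<Longrightarrow> sum f S \<in> J"
proof (induction S rule: infinite_finite_induct)
  case (infinite A) then show ?case using ideal_0 by simp
next
  case empty then show ?case using ideal_0 by simp
next
  case (insert x F)
  have "f x \<in> J" "sum f F \<in> J" using insert by auto
  then show ?case using insert(1,2) ideal_add[OF insert(4)] by simp
qed
lemma ideal_UNIV: "is_ideal J \<Longrightarrow> 1 \<in> J \<Longrightarrow> J = UNIV"
  using ideal_mult[of J 1] by auto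
lemma is_ideal_UNIV: "is_ideal UNIV" unfolding is_ideal_def by simp

lemma is_ideal_Inter: "(\<And>J. J \<in> S \<Longrightarrow> is_ideal J) \<Longrightarrow> is_ideal (\<Inter>S)"
  unfolding is_ideal_def by blast

lemma ideal_gen_ideal: "is_ideal (ideal_gen F)"
  unfolding ideal_gen_def by (rule is_ideal_Inter) blast

lemma ideal_gen_sup: "F \<subseteq> ideal_gen F"
  unfolding ideal_gen_def by blast

lemma ideal_gen_least: "is_ideal J \<Longrightarrow> F \<subseteq> J \<Longrightarrow> ideal_gen F \<subseteq> J"
  unfolding ideal_gen_def by blast

lemma ideal_gen_mono: "F \<subseteq> G \<Longrightarrow> ideal_gen F \<subseteq> ideal_gen G"
  using ideal_gen_least[OF ideal_gen_ideal, of F G] ideal_gen_sup[of G] by blast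

lemma ideal_gen_mult:
  assumes a: "a \<in> ideal_gen X" and b: "b \<in> ideal_gen Y"
  shows "a * b \<in> ideal_gen {x * y | x y. x \<in> X \<and> y \<in> Y}"
proof -
  let ?Z = "ideal_gen {x * y | x y. x \<in> X \<and> y \<in> Y}"
  have Zi: "is_ideal ?Z" by (rule ideal_gen_ideal)
  have step1: "a' * y \<in> ?Z" if "a' \<in> ideal_gen X" "y \<in> Y" for a' y
  proof -
    have "is_ideal {a. a * y \<in> ?Z}"
      unfolding is_ideal_def using Zi
      by (auto simp: distrib_right mult.assoc intro: ideal_add ideal_mult ideal_0)
    moreover have "X \<subseteq> {a. a * y \<in> ?Z}"
    proof
      fix x assume "x \<in> X"
      then have "x * y \<in> {x * y | x y. x \<in> X \<and> y \<in> Y}" using that by blast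
      then have "x * y \<in> ?Z" using ideal_gen_sup[of "{x * y | x y. x \<in> X \<and> y \<in> Y}"] by (rule subsetD[rotated])
      then show "x \<in> {a. a * y \<in> ?Z}" by simp
    qed
    ultimately have "ideal_gen X \<subseteq> {a. a * y \<in> ?Z}" by (rule ideal_gen_least)
    then show ?thesis using that by blast
  qed
  have "is_ideal {b. a * b \<in> ?Z}"
    unfolding is_ideal_def using Zi
    by (auto simp: distrib_left mult.left_commute intro: ideal_add ideal_mult ideal_0)
  moreover have "Y \<subseteq> {b. a * b \<in> ?Z}" using step1[OF a] by blast
  ultimately have "ideal_gen Y \<subseteq> {b. a * b \<in> ?Z}" by (rule ideal_gen_least)
  then show ?thesis using b by blast
qed

lemma ideal_gen_insert:
  "ideal_gen (insert g X) = {c + r * g | c r. c \<in> ideal_gen X}"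
proof
  let ?R = "{c + r * g | c r. c \<in> ideal_gen X}"
  have Ii: "is_ideal (ideal_gen X)" by (rule ideal_gen_ideal)
  have "is_ideal ?R"
    unfolding is_ideal_def
  proof (intro conjI allI ballI impI)
    show "0 \<in> ?R" using ideal_0[OF Ii] by (metis (mono_tags, lifting) add_0 mem_Collect_eq mult_zero_left)
  next
    fix x y assume "x \<in> ?R" "y \<in> ?R"
    then obtain c r c' r' where h: "x = c + r * g" "c \<in> ideal_gen X" "y = c' + r' * g" "c' \<in> ideal_gen X" by blast
    have "x + y = (c + c') + (r + r') * g" using h by (simp add: algebra_simps)
    moreover have "c + c' \<in> ideal_gen X" using h ideal_add[OF Ii] by blast
    ultimately show "x + y \<in> ?R" by blast
  next
    fix s x assume "x \<in> ?R"
    then obtain c r where h: "x = c + r * g" "c \<in> ideal_gen X" by blast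
    have "s * x = s * c + (s * r) * g" using h by (simp add: algebra_simps)
    moreover have "s * c \<in> ideal_gen X" using h ideal_mult[OF Ii] by blast
    ultimately show "s * x \<in> ?R" by blast
  qed
  moreover have "insert g X \<subseteq> ?R"
  proof
    fix x assume "x \<in> insert g X"
    then show "x \<in> ?R"
    proof
      assume "x = g"
      then have "x = 0 + 1 * g" by simp
      then show ?thesis using ideal_0[OF Ii] by blast
    next
      assume "x \<in> X"
      then have "x = x + 0 * g" "x \<in> ideal_gen X" using ideal_gen_sup by auto
      then show ?thesis by blast
    qed
  qed
  ultimately show "ideal_gen (insert g X) \<subseteq> ?R" by (rule ideal_gen_least)
next
  show "{c + r * g | c r. c \<in> ideal_gen X} \<subseteq> ideal_gen (insert g X)"
  proof
    fix x assume "x \<in> {c + r * g | c r. c \<in> ideal_gen X}"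
    then obtain c r where h: "x = c + r * g" "c \<in> ideal_gen X" by blast
    have "c \<in> ideal_gen (insert g X)" using h ideal_gen_mono[of X "insert g X"] by blast
    moreover have "g \<in> ideal_gen (insert g X)" using ideal_gen_sup by blast
    ultimately show "x \<in> ideal_gen (insert g X)"
      using h ideal_add[OF ideal_gen_ideal] ideal_mult[OF ideal_gen_ideal] by blast
  qed
qed

lemma ideal_gen_of_ideal: "is_ideal J \<Longrightarrow> ideal_gen J = J"
  using ideal_gen_least[of J J] ideal_gen_sup[of J] by blast

lemma exists_maximal:
  fixes J :: "'a::comm_ring_1 set"
  assumes J: "is_ideal J" "1 \<notin> J"
  shows "\<exists>M. is_maximal_ideal M \<and> J \<subseteq> M"
proof -
  let ?A = "{K. is_ideal K \<and> J \<subseteq> K \<and> 1 \<notin> K}"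
  have "\<forall>C\<in>chains ?A. \<exists>U\<in>?A. \<forall>X\<in>C. X \<subseteq> U"
  proof
    fix C assume C: "C \<in> chains ?A"
    show "\<exists>U\<in>?A. \<forall>X\<in>C. X \<subseteq> U"
    proof (cases "C = {}")
      case True then show ?thesis using J by blast
    next
      case False
      have CA: "C \<subseteq> ?A" and ch: "\<forall>X\<in>C. \<forall>Y\<in>C. X \<subseteq> Y \<or> Y \<subseteq> X"
        using C unfolding chains_def chain_subset_def by auto
      have "is_ideal (\<Union>C)"
        unfolding is_ideal_def
      proof (intro conjI ballI allI impI)
        show "0 \<in> \<Union>C" using False CA ideal_0 by blast
      next
        fix x y assume "x \<in> \<Union>C" "y \<in> \<Union>C"
        then obtain X Y where "X \<in> C" "Y \<in> C" "x \<in> X" "y \<in> Y" by blast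
        then show "x + y \<in> \<Union>C" using ch CA ideal_add
          by (metis (no_types, lifting) UnionI mem_Collect_eq subset_eq)
      next
        fix r x assume "x \<in> \<Union>C"
        then obtain X where "X \<in> C" "x \<in> X" by blast
        then show "r * x \<in> \<Union>C" using CA ideal_mult by blast
      qed
      moreover have "J \<subseteq> \<Union>C" using False CA by blast
      moreover have "1 \<notin> \<Union>C" using CA by blast
      ultimately show ?thesis by blast
    qed
  qed
  from Zorn_Lemma2[OF this] obtain M where M: "M \<in> ?A" "\<forall>X\<in>?A. M \<subseteq> X \<longrightarrow> X = M" by blast
  have "is_maximal_ideal M"
    unfolding is_maximal_ideal_def
  proof (intro conjI allI impI)
    show "is_ideal M" using M by blast
    show "M \<noteq> UNIV" using M by blast
    fix K assume K: "is_ideal K \<and> M \<subseteq> K"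
    show "K = M \<or> K = UNIV"
    proof (cases "1 \<in> K")
      case True then show ?thesis using ideal_UNIV K by blast
    next
      case False then have "K \<in> ?A" using K M by blast
      then show ?thesis using M K by blast
    qed
  qed
  then show ?thesis using M by blast
qed

lemma local_unit:
  assumes "local_ring_with m" "s \<notin> m"
  shows "\<exists>t. t * s = 1"
proof (rule ccontr)
  assume nu: "\<not> (\<exists>t. t * s = 1)"
  let ?J = "{r * s | r. True}"
  have Ji: "is_ideal ?J"
    unfolding is_ideal_def
  proof (intro conjI ballI allI impI)
    show "0 \<in> ?J" by (metis (mono_tags) mem_Collect_eq mult_zero_left)
    fix x y assume "x \<in> ?J" "y \<in> ?J"
    then obtain a b where "x = a * s" "y = b * s" by blast
    then have "x + y = (a + b) * s" by (simp add: algebra_simps)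
    then show "x + y \<in> ?J" by blast
  next
    fix r x assume "x \<in> ?J"
    then obtain a where "x = a * s" by blast
    then have "r * x = (r * a) * s" by (simp add: algebra_simps)
    then show "r * x \<in> ?J" by blast
  qed
  have "1 \<notin> ?J" using nu by auto
  then obtain M where M: "is_maximal_ideal M" "?J \<subseteq> M" using exists_maximal[OF Ji] by blast
  then have "M = m" using assms(1) unfolding local_ring_with_def by blast
  moreover have "s \<in> ?J" by (metis (mono_tags) mem_Collect_eq mult_1)
  ultimately show False using M assms(2) by blast
qed

lemma local_m_ideal: "local_ring_with m \<Longrightarrow> is_ideal m"
  unfolding local_ring_with_def is_maximal_ideal_def by blast

lemma local_one_notin: "local_ring_with m \<Longrightarrow> (1::'a::comm_ring_1) \<notin> m"
  using ideal_UNIV local_m_ideal unfolding local_ring_with_def is_maximal_ideal_def by blast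

lemma local_proper_sub:
  assumes "local_ring_with m" "is_ideal J" "1 \<notin> J"
  shows "J \<subseteq> m"
proof
  fix x assume x: "x \<in> J"
  show "x \<in> m"
  proof (rule ccontr)
    assume "x \<notin> m"
    then obtain t where "t * x = 1" using local_unit[OF assms(1)] by blast
    then have "1 \<in> J" using ideal_mult[OF assms(2) x, of t] by simp
    then show False using assms(3) by blast
  qed
qed

lemma local_one_minus:
  assumes "local_ring_with m" "c \<in> m"
  shows "\<exists>t. t * (1 - c) = 1"
proof -
  have "1 - c \<notin> m"
  proof
    assume "1 - c \<in> m"
    then have "(1 - c) + c \<in> m" using ideal_add[OF local_m_ideal[OF assms(1)]] assms(2) by blast
    then show False using local_one_notin[OF assms(1)] by simp
  qed
  then show ?thesis using local_unit[OF assms(1)] by blast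
qed

lemma noeth_acc:
  fixes I :: "nat \<Rightarrow> 'a::comm_ring_1 set"
  assumes noeth: "noetherian_ring TYPE('a)"
    and Ii: "\<And>n. is_ideal (I n)" and mono: "\<And>n. I n \<subseteq> I (Suc n)"
  shows "\<exists>N. \<forall>n\<ge>N. I n = I N"
proof -
  have mono': "I i \<subseteq> I j" if "i \<le> j" for i j
    using lift_Suc_mono_le[of I, OF mono that] .
  let ?U = "\<Union>n. I n"
  have Ui: "is_ideal ?U"
    unfolding is_ideal_def
  proof (intro conjI ballI allI impI)
    show "0 \<in> ?U" using ideal_0[OF Ii] by blast
  next
    fix x y assume "x \<in> ?U" "y \<in> ?U"
    then obtain i j where "x \<in> I i" "y \<in> I j" by blast
    then have "x \<in> I (max i j)" "y \<in> I (max i j)" using mono'[of i "max i j"] mono'[of j "max i j"] by auto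
    then show "x + y \<in> ?U" using ideal_add[OF Ii] by blast
  next
    fix r x assume "x \<in> ?U"
    then obtain i where "x \<in> I i" by blast
    then show "r * x \<in> ?U" using ideal_mult[OF Ii] by blast
  qed
  have nn: "\<forall>J::'a set. is_ideal J \<longrightarrow> (\<exists>F. finite F \<and> J = ideal_gen F)"
    using noeth unfolding noetherian_ring_def by simp
  from nn[rule_format, OF Ui] obtain F where F: "finite F" "?U = ideal_gen F" by (elim exE conjE)
  have "\<forall>f\<in>F. \<exists>n. f \<in> I n"
  proof
    fix f assume "f \<in> F"
    then have "f \<in> ?U" using F(2) ideal_gen_sup[of F] by (simp add: subset_iff)
    then show "\<exists>n. f \<in> I n" by simp
  qed
  then obtain nf where nf: "\<forall>f\<in>F. f \<in> I (nf f)" by metis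
  define N where "N = Max (nf ` F)"
  have "F \<subseteq> I N"
  proof
    fix f assume "f \<in> F"
    then have "nf f \<le> N" unfolding N_def using F(1) by simp
    then show "f \<in> I N" using nf \<open>f \<in> F\<close> mono' by blast
  qed
  then have "?U \<subseteq> I N" using F ideal_gen_least[OF Ii] by metis
  then show ?thesis using mono' by blast
qed

lemma prodset_mem: "length xs = n \<Longrightarrow> set xs \<subseteq> J \<Longrightarrow> z = prod_list xs \<Longrightarrow> z \<in> {prod_list xs | xs. length xs = n \<and> set xs \<subseteq> J}"
  by (intro CollectI exI[of _ xs]) simp

lemma ideal_pow_ideal: "is_ideal (ideal_pow J n)"
  unfolding ideal_pow_def by (rule ideal_gen_ideal)

lemma ideal_pow_0: "ideal_pow J 0 = UNIV"
proof -
  have "1 \<in> {prod_list xs | xs. length xs = 0 \<and> set xs \<subseteq> J}" by (rule prodset_mem[of "[]"]) auto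
  then have "1 \<in> ideal_pow J 0" unfolding ideal_pow_def by (rule subsetD[OF ideal_gen_sup])
  then show ?thesis using ideal_UNIV[OF ideal_pow_ideal] by blast
qed

lemma ideal_pow_mult:
  assumes J: "is_ideal J" and a: "a \<in> J" and b: "b \<in> ideal_pow J n"
  shows "a * b \<in> ideal_pow J (Suc n)"
proof -
  let ?P = "\<lambda>n. {prod_list xs | xs. length xs = n \<and> set xs \<subseteq> J}"
  have "a \<in> ideal_gen J" using a by (rule subsetD[OF ideal_gen_sup])
  then have "a * b \<in> ideal_gen {x * y | x y. x \<in> J \<and> y \<in> ?P n}"
    using ideal_gen_mult[of a J b "?P n"] b unfolding ideal_pow_def by blast
  moreover have "{x * y | x y. x \<in> J \<and> y \<in> ?P n} \<subseteq> ?P (Suc n)"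
  proof
    fix z assume "z \<in> {x * y | x y. x \<in> J \<and> y \<in> ?P n}"
    then obtain x xs where h: "z = x * prod_list xs" "x \<in> J" "length xs = n" "set xs \<subseteq> J" by blast
    then show "z \<in> ?P (Suc n)" by (intro prodset_mem[of "x # xs"]) auto
  qed
  ultimately show ?thesis unfolding ideal_pow_def by (rule subsetD[OF ideal_gen_mono, rotated])
qed

lemma ideal_pow_Suc_sub:
  assumes J: "is_ideal J"
  shows "ideal_pow J (Suc n) \<subseteq> ideal_pow J n"
proof -
  have "{prod_list xs | xs. length xs = Suc n \<and> set xs \<subseteq> J} \<subseteq> ideal_pow J n"
  proof
    fix z assume "z \<in> {prod_list xs | xs. length xs = Suc n \<and> set xs \<subseteq> J}"
    then obtain xs where h: "z = prod_list xs" "length xs = Suc n" "set xs \<subseteq> J" by blast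
    then obtain x ys where xs: "xs = x # ys" by (cases xs) auto
    have "prod_list ys \<in> {prod_list xs | xs. length xs = n \<and> set xs \<subseteq> J}" using h xs by (intro prodset_mem) auto
    then have "prod_list ys \<in> ideal_pow J n" unfolding ideal_pow_def by (rule subsetD[OF ideal_gen_sup])
    then have "x * prod_list ys \<in> ideal_pow J n" by (rule ideal_mult[OF ideal_pow_ideal])
    then show "z \<in> ideal_pow J n" using h xs by simp
  qed
  then show ?thesis unfolding ideal_pow_def[of J "Suc n"]
    by (rule ideal_gen_least[OF ideal_pow_ideal])
qed

lemma ideal_pow_anti:
  assumes "is_ideal J" "n \<le> n'"
  shows "ideal_pow J n' \<subseteq> ideal_pow J n"
  using assms(2)
proof (induction n' rule: dec_induct)
  case base then show ?case by simp
next
  case (step k) then show ?case using ideal_pow_Suc_sub[OF assms(1), of k] by blast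
qed

lemma bnd_refl:
  assumes "submod sc A"
  shows "bnd sc A A 0"
  unfolding bnd_def
proof (intro allI impI)
  fix n c assume c: "schain sc A A n c"
  show "n \<le> 0"
  proof (rule ccontr)
    assume "\<not> n \<le> 0"
    then have "c 0 \<subset> c n" using schain_strict[OF c, of 0 n] by simp
    then show False using c unfolding schain_def by simp
  qed
qed

lemma bnd_one:
  assumes "\<And>Y. submod sc Y \<Longrightarrow> A \<subset> Y \<Longrightarrow> Y \<subseteq> B \<Longrightarrow> Y = B"
  shows "bnd sc A B 1"
  unfolding bnd_def
proof (intro allI impI)
  fix n c assume c: "schain sc A B n c"
  show "n \<le> 1"
  proof (rule ccontr)
    assume "\<not> n \<le> 1"
    then have n2: "2 \<le> n" by simp
    have "c 0 \<subset> c 1" using schain_strict[OF c, of 0 1] n2 by simp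
    moreover have "c 1 \<subset> c 2" using schain_strict[OF c, of 1 2] n2 by simp
    moreover have "c 2 \<subseteq> B" using schain_in[OF c, of 2] n2 by simp
    moreover have "submod sc (c 1)" using c n2 unfolding schain_def by simp
    moreover have "c 0 = A" using c unfolding schain_def by simp
    ultimately have "c 1 = B" using assms by blast
    then show False using \<open>c 1 \<subset> c 2\<close> \<open>c 2 \<subseteq> B\<close> by blast
  qed
qed

lemma prod_list_count:
  fixes ys :: "'a::comm_monoid_mult list"
  shows "prod_list ys = g ^ count_list ys g * prod_list (filter (\<lambda>x. x \<noteq> g) ys)"
proof (induction ys)
  case Nil then show ?case by simp
next
  case (Cons a ys) then show ?case by (simp add: algebra_simps)
qed

lemma prod_list_mon:
  fixes G :: "'a::comm_ring_1 set"
  shows "set xs \<subseteq> ideal_gen G \<Longrightarrow>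
    prod_list xs \<in> ideal_gen {prod_list ys | ys. length ys = length xs \<and> set ys \<subseteq> G}"
proof (induction xs)
  case Nil
  have "prod_list [] \<in> {prod_list ys | ys. length ys = length ([]::'a list) \<and> set ys \<subseteq> G}" by (rule prodset_mem) auto
  then show ?case by (rule subsetD[OF ideal_gen_sup])
next
  case (Cons x xs)
  let ?M = "\<lambda>k. {prod_list ys | ys. length ys = k \<and> set ys \<subseteq> G}"
  have "x \<in> ideal_gen G" "prod_list xs \<in> ideal_gen (?M (length xs))" using Cons by auto
  then have "x * prod_list xs \<in> ideal_gen {a * b | a b. a \<in> G \<and> b \<in> ?M (length xs)}"
    by (rule ideal_gen_mult)
  moreover have "{a * b | a b. a \<in> G \<and> b \<in> ?M (length xs)} \<subseteq> ?M (length (x # xs))"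
  proof
    fix z assume "z \<in> {a * b | a b. a \<in> G \<and> b \<in> ?M (length xs)}"
    then obtain a ys where h: "z = a * prod_list ys" "a \<in> G" "length ys = length xs" "set ys \<subseteq> G" by blast
    then show "z \<in> ?M (length (x # xs))" by (intro prodset_mem[of "a # ys"]) auto
  qed
  ultimately have "x * prod_list xs \<in> ideal_gen (?M (length (x # xs)))" by (rule subsetD[OF ideal_gen_mono, rotated])
  then show ?case by simp
qed

locale hull =
  fixes sc :: "'a::comm_ring_1 \<Rightarrow> 'e::ab_group_add \<Rightarrow> 'e" and m :: "'a set" and u :: 'e
  assumes md: "module sc"
    and loc: "local_ring_with m"
    and noeth: "noetherian_ring TYPE('a)"
    and injm: "injective_mod sc"
    and ann_u: "{r. sc r u = 0} = m"
    and ess: "\<And>N. submod sc N \<Longrightarrow> N \<noteq> {0} \<Longrightarrow> N \<inter> range (\<lambda>r. sc r u) \<noteq> {0}"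
begin

sublocale M: module sc by (rule md)

lemma m_ideal: "is_ideal m" using local_m_ideal[OF loc] .

lemma one_notin_m: "1 \<notin> m" using local_one_notin[OF loc] .

lemma u_ne: "u \<noteq> 0"
proof
  assume "u = 0"
  then have "1 \<in> {r. sc r u = 0}" by simp
  then show False using ann_u one_notin_m by blast
qed

lemma m_kills_u: "a \<in> m \<Longrightarrow> sc a u = 0"
  using ann_u by blast

lemma cyc_submod: "submod sc (range (\<lambda>r. sc r z))"
  unfolding submod_def
proof (intro conjI ballI allI)
  show "0 \<in> range (\<lambda>r. sc r z)" by (metis M.scale_zero_left rangeI)
next
  fix x y assume "x \<in> range (\<lambda>r. sc r z)" "y \<in> range (\<lambda>r. sc r z)"
  then obtain a b where "x = sc a z" "y = sc b z" by blast
  then have "x + y = sc (a + b) z" by (simp add: M.scale_left_distrib)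
  then show "x + y \<in> range (\<lambda>r. sc r z)" by blast
next
  fix r x assume "x \<in> range (\<lambda>r. sc r z)"
  then obtain a where "x = sc a z" by blast
  then have "sc r x = sc (r * a) z" by simp
  then show "sc r x \<in> range (\<lambda>r. sc r z)" by blast
qed

lemma u_in:
  assumes N: "submod sc N" "N \<noteq> {0}"
  shows "u \<in> N"
proof -
  obtain w where w: "w \<in> N" "w \<in> range (\<lambda>r. sc r u)" "w \<noteq> 0"
  proof -
    have "0 \<in> N" using N unfolding submod_def by blast
    moreover have "0 \<in> range (\<lambda>r. sc r u)" by (metis M.scale_zero_left rangeI)
    ultimately show ?thesis using ess[OF N] that by blast
  qed
  then obtain s where s: "w = sc s u" by blast
  have "s \<notin> m" using s w m_kills_u by blast
  then obtain t where t: "t * s = 1" using local_unit[OF loc] by blast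
  have "sc t w \<in> N" using w N unfolding submod_def by blast
  moreover have "sc t w = u" using s t by simp
  ultimately show ?thesis by simp
qed

lemma in_cyc_self: "z \<in> range (\<lambda>r. sc r z)"
  by (metis M.scale_one rangeI)

lemma soc:
  assumes "\<forall>a\<in>m. sc a z = 0"
  shows "\<exists>t. z = sc t u"
proof (cases "z = 0")
  case True then show ?thesis by (metis M.scale_zero_left)
next
  case False
  have "range (\<lambda>r. sc r z) \<noteq> {0}" using in_cyc_self[of z] False by blast
  then have "u \<in> range (\<lambda>r. sc r z)" using u_in[OF cyc_submod] by blast
  then obtain c where c: "u = sc c z" by blast
  have "c \<notin> m" using c assms u_ne by blast
  then obtain t where t: "t * c = 1" using local_unit[OF loc] by blast
  have "sc t u = z" using c t by simp
  then show ?thesis by metis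
qed

lemma baer:
  assumes "is_ideal J" "\<And>x y. x \<in> J \<Longrightarrow> y \<in> J \<Longrightarrow> g (x + y) = g x + g y"
    "\<And>r x. x \<in> J \<Longrightarrow> g (r * x) = sc r (g x)"
  shows "\<exists>e. \<forall>x\<in>J. g x = sc x e"
  using injm assms unfolding injective_mod_def by blast

lemma ann_sep:
  assumes L: "is_ideal L" and r: "r \<notin> L"
  shows "\<exists>e. (\<forall>l\<in>L. sc l e = 0) \<and> sc r e = u"
proof -
  let ?col = "{s. s * r \<in> L}"
  have coli: "is_ideal ?col"
    unfolding is_ideal_def
  proof (intro conjI allI ballI impI)
    show "0 \<in> ?col" using ideal_0[OF L] by simp
  next
    fix x y assume "x \<in> ?col" "y \<in> ?col"
    then show "x + y \<in> ?col" using ideal_add[OF L] by (simp add: distrib_right)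
  next
    fix s x assume "x \<in> ?col"
    then show "s * x \<in> ?col" using ideal_mult[OF L, of "x * r" s] by (simp add: mult.assoc)
  qed
  have "1 \<notin> ?col" using r by simp
  then have colm: "?col \<subseteq> m" using local_proper_sub[OF loc coli] by blast
  let ?J = "{l + s * r | l s. l \<in> L}"
  have Ji: "is_ideal ?J"
    unfolding is_ideal_def
  proof (intro conjI allI ballI impI)
    have "0 = 0 + 0 * r" by simp
    then show "0 \<in> ?J" using ideal_0[OF L] by blast
  next
    fix x y assume "x \<in> ?J" "y \<in> ?J"
    then obtain l s l' s' where h: "x = l + s * r" "y = l' + s' * r" "l \<in> L" "l' \<in> L" by blast
    then have "x + y = (l + l') + (s + s') * r" by (simp add: algebra_simps)
    moreover have "l + l' \<in> L" using h ideal_add[OF L] by blast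
    ultimately show "x + y \<in> ?J" by blast
  next
    fix t x assume "x \<in> ?J"
    then obtain l s where h: "x = l + s * r" "l \<in> L" by blast
    then have "t * x = t * l + (t * s) * r" by (simp add: algebra_simps)
    moreover have "t * l \<in> L" using h ideal_mult[OF L] by blast
    ultimately show "t * x \<in> ?J" by blast
  qed
  define g where "g x = sc (SOME s. \<exists>l\<in>L. x = l + s * r) u" for x
  have gk: "g x = sc s u" if "l \<in> L" "x = l + s * r" for x l s
  proof -
    have ex: "\<exists>s. \<exists>l\<in>L. x = l + s * r" using that by blast
    define s' where "s' = (SOME s. \<exists>l\<in>L. x = l + s * r)"
    have "\<exists>l\<in>L. x = l + s' * r" unfolding s'_def by (rule someI_ex[OF ex])
    then obtain l' where l': "l' \<in> L" "x = l' + s' * r" by blast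
    have "(s - s') * r = l' - l" using that l' by (simp add: algebra_simps)
    then have "(s - s') * r \<in> L" using ideal_diff[OF L l'(1) that(1)] by simp
    then have "s - s' \<in> m" using colm by blast
    then have "sc (s - s') u = 0" by (rule m_kills_u)
    then have "sc s u = sc s' u" by (simp add: M.scale_left_diff_distrib)
    then show ?thesis unfolding g_def s'_def by simp
  qed
  have "\<exists>e. \<forall>x\<in>?J. g x = sc x e"
  proof (rule baer[OF Ji])
    fix x y assume "x \<in> ?J" "y \<in> ?J"
    then obtain l s l' s' where h: "x = l + s * r" "y = l' + s' * r" "l \<in> L" "l' \<in> L" by blast
    have "x + y = (l + l') + (s + s') * r" using h by (simp add: algebra_simps)
    moreover have "l + l' \<in> L" using h ideal_add[OF L] by blast
    ultimately have "g (x + y) = sc (s + s') u" using gk by blast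
    also have "\<dots> = g x + g y" using gk[OF h(3,1)] gk[OF h(4,2)] by (simp add: M.scale_left_distrib)
    finally show "g (x + y) = g x + g y" .
  next
    fix t x assume "x \<in> ?J"
    then obtain l s where h: "x = l + s * r" "l \<in> L" by blast
    have "t * x = t * l + (t * s) * r" using h by (simp add: algebra_simps)
    moreover have "t * l \<in> L" using h ideal_mult[OF L] by blast
    ultimately have "g (t * x) = sc (t * s) u" using gk by blast
    then show "g (t * x) = sc t (g x)" using gk[OF h(2,1)] by simp
  qed
  then obtain e where e: "\<forall>x\<in>?J. g x = sc x e" by blast
  have "\<forall>l\<in>L. sc l e = 0"
  proof
    fix l assume l: "l \<in> L"
    have "l = l + 0 * r" by simp
    then have "l \<in> ?J" "g l = sc 0 u" using l gk by blast+
    then show "sc l e = 0" using e by simp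
  qed
  moreover have "sc r e = u"
  proof -
    have "r = 0 + 1 * r" by simp
    then have "r \<in> ?J" "g r = sc 1 u" using ideal_0[OF L] gk by blast+
    then show ?thesis using e by simp
  qed
  ultimately show ?thesis by blast
qed

lemma ann_split:
  assumes A: "is_ideal A" and B: "is_ideal B" and x: "\<forall>c\<in>A \<inter> B. sc c x = 0"
  shows "\<exists>y1 y2. x = y1 + y2 \<and> (\<forall>a\<in>A. sc a y1 = 0) \<and> (\<forall>b\<in>B. sc b y2 = 0)"
proof -
  let ?J = "{a + b | a b. a \<in> A \<and> b \<in> B}"
  have Ji: "is_ideal ?J"
    unfolding is_ideal_def
  proof (intro conjI allI ballI impI)
    have "(0::'a) = 0 + 0" by simp
    then show "0 \<in> ?J" using ideal_0[OF A] ideal_0[OF B] by blast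
  next
    fix x y assume "x \<in> ?J" "y \<in> ?J"
    then obtain a b a' b' where h: "x = a + b" "y = a' + b'" "a \<in> A" "b \<in> B" "a' \<in> A" "b' \<in> B" by blast
    then have "x + y = (a + a') + (b + b')" by (simp add: algebra_simps)
    moreover have "a + a' \<in> A" "b + b' \<in> B" using h ideal_add[OF A] ideal_add[OF B] by blast+
    ultimately show "x + y \<in> ?J" by blast
  next
    fix t x assume "x \<in> ?J"
    then obtain a b where h: "x = a + b" "a \<in> A" "b \<in> B" by blast
    then have "t * x = t * a + t * b" by (simp add: algebra_simps)
    moreover have "t * a \<in> A" "t * b \<in> B" using h ideal_mult[OF A] ideal_mult[OF B] by blast+
    ultimately show "t * x \<in> ?J" by blast
  qed
  define g where "g z = sc (SOME a. a \<in> A \<and> (\<exists>b\<in>B. z = a + b)) x" for z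
  have gk: "g z = sc a x" if "a \<in> A" "b \<in> B" "z = a + b" for z a b
  proof -
    have ex: "\<exists>a. a \<in> A \<and> (\<exists>b\<in>B. z = a + b)" using that by blast
    define a' where "a' = (SOME a. a \<in> A \<and> (\<exists>b\<in>B. z = a + b))"
    have "a' \<in> A \<and> (\<exists>b\<in>B. z = a' + b)" unfolding a'_def by (rule someI_ex[OF ex])
    then obtain b' where h: "a' \<in> A" "b' \<in> B" "z = a' + b'" by blast
    have "a - a' = b' - b" using that h by (simp add: algebra_simps)
    moreover have "a - a' \<in> A" using ideal_diff[OF A that(1) h(1)] .
    moreover have "b' - b \<in> B" using ideal_diff[OF B h(2) that(2)] .
    ultimately have "a - a' \<in> A \<inter> B" by simp
    then have "sc (a - a') x = 0" using x by blast
    then have "sc a x = sc a' x" by (simp add: M.scale_left_diff_distrib)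
    then show ?thesis unfolding g_def a'_def by simp
  qed
  have "\<exists>e. \<forall>z\<in>?J. g z = sc z e"
  proof (rule baer[OF Ji])
    fix z w assume "z \<in> ?J" "w \<in> ?J"
    then obtain a b a' b' where h: "z = a + b" "w = a' + b'" "a \<in> A" "b \<in> B" "a' \<in> A" "b' \<in> B" by blast
    have "z + w = (a + a') + (b + b')" using h by (simp add: algebra_simps)
    moreover have "a + a' \<in> A" "b + b' \<in> B" using h ideal_add[OF A] ideal_add[OF B] by blast+
    ultimately have "g (z + w) = sc (a + a') x" using gk by blast
    also have "\<dots> = g z + g w" using gk[OF h(3,4,1)] gk[OF h(5,6,2)] by (simp add: M.scale_left_distrib)
    finally show "g (z + w) = g z + g w" .
  next
    fix t z assume "z \<in> ?J"
    then obtain a b where h: "z = a + b" "a \<in> A" "b \<in> B" by blast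
    have "t * z = t * a + t * b" using h by (simp add: algebra_simps)
    moreover have "t * a \<in> A" "t * b \<in> B" using h ideal_mult[OF A] ideal_mult[OF B] by blast+
    ultimately have "g (t * z) = sc (t * a) x" using gk by blast
    then show "g (t * z) = sc t (g z)" using gk[OF h(2,3,1)] by simp
  qed
  then obtain y where y: "\<forall>z\<in>?J. g z = sc z y" by blast
  have "\<forall>a\<in>A. sc a (x - y) = 0"
  proof
    fix a assume a: "a \<in> A"
    have "a = a + 0" by simp
    then have "a \<in> ?J" "g a = sc a x" using a ideal_0[OF B] gk by blast+
    then show "sc a (x - y) = 0" using y by (simp add: M.scale_right_diff_distrib)
  qed
  moreover have "\<forall>b\<in>B. sc b y = 0"
  proof
    fix b assume b: "b \<in> B"
    have "b = 0 + b" by simp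
    then have "b \<in> ?J" "g b = sc 0 x" using b ideal_0[OF A] gk by blast+
    then show "sc b y = 0" using y by simp
  qed
  moreover have "x = (x - y) + y" by simp
  ultimately show ?thesis by blast
qed

lemma nilp:
  assumes a: "a \<in> m"
  shows "\<exists>n. sc (a ^ n) y = 0"
proof -
  define I where "I n = {r. sc (r * a ^ n) y = 0}" for n
  have Ii: "is_ideal (I n)" for n
    unfolding is_ideal_def I_def
  proof (intro conjI allI ballI impI)
    show "0 \<in> {r. sc (r * a ^ n) y = 0}" by simp
  next
    fix x z assume "x \<in> {r. sc (r * a ^ n) y = 0}" "z \<in> {r. sc (r * a ^ n) y = 0}"
    then show "x + z \<in> {r. sc (r * a ^ n) y = 0}" by (simp add: distrib_right M.scale_left_distrib)
  next
    fix s x assume "x \<in> {r. sc (r * a ^ n) y = 0}"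
    then have "sc s (sc (x * a ^ n) y) = 0" by simp
    then show "s * x \<in> {r. sc (r * a ^ n) y = 0}" by (simp add: mult.assoc)
  qed
  have mono: "I n \<subseteq> I (Suc n)" for n
  proof
    fix r assume "r \<in> I n"
    then have "sc a (sc (r * a ^ n) y) = 0" unfolding I_def by simp
    moreover have "a * (r * a ^ n) = r * a ^ Suc n" by (simp add: algebra_simps)
    ultimately show "r \<in> I (Suc n)" unfolding I_def by simp
  qed
  obtain N where N: "\<forall>n\<ge>N. I n = I N" using noeth_acc[of I, OF noeth Ii mono] by blast
  define z where "z = sc (a ^ N) y"
  show ?thesis
  proof (cases "z = 0")
    case True then show ?thesis unfolding z_def by blast
  next
    case False
    have "range (\<lambda>r. sc r z) \<noteq> {0}" using in_cyc_self[of z] False by blast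
    then have "u \<in> range (\<lambda>r. sc r z)" using u_in[OF cyc_submod] by blast
    then obtain s where s: "u = sc s z" by blast
    have "sc a u = 0" using m_kills_u[OF a] .
    then have "sc (s * a ^ Suc N) y = 0" using s unfolding z_def by (simp add: algebra_simps)
    then have "s \<in> I (Suc N)" unfolding I_def by simp
    moreover have "I (Suc N) = I N" using N le_SucI by blast
    ultimately have "s \<in> I N" by simp
    then have "u = 0" using s unfolding I_def z_def by simp
    then show ?thesis using u_ne by simp
  qed
qed

lemma torsion: "\<exists>K. \<forall>q\<in>ideal_pow m K. sc q y = 0"
proof -
  have nn: "\<forall>J::'a set. is_ideal J \<longrightarrow> (\<exists>F. finite F \<and> J = ideal_gen F)"
    using noeth unfolding noetherian_ring_def by simp
  from nn[rule_format, OF m_ideal] obtain G where G: "finite G" "m = ideal_gen G" by (elim exE conjE)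
  have Gm: "G \<subseteq> m" using G(2) ideal_gen_sup[of G] by simp
  have "\<forall>g\<in>G. \<exists>n. sc (g ^ n) y = 0" using Gm nilp by blast
  then obtain ng where ng: "\<forall>g\<in>G. sc (g ^ ng g) y = 0" by metis
  define N where "N = Max (ng ` G)"
  define K where "K = card G * N + 1"
  let ?Z = "{r. sc r y = 0}"
  have Zi: "is_ideal ?Z"
    unfolding is_ideal_def
  proof (intro conjI allI ballI impI)
    show "0 \<in> ?Z" by simp
  next
    fix x z assume "x \<in> ?Z" "z \<in> ?Z" then show "x + z \<in> ?Z" by (simp add: M.scale_left_distrib)
  next
    fix s x assume "x \<in> ?Z"
    then have "sc s (sc x y) = 0" by simp
    then show "s * x \<in> ?Z" by simp
  qed
  let ?Mon = "{prod_list ys | ys. length ys = K \<and> set ys \<subseteq> G}"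
  have MonZ: "?Mon \<subseteq> ?Z"
  proof
    fix z assume "z \<in> ?Mon"
    then obtain ys where ys: "z = prod_list ys" "length ys = K" "set ys \<subseteq> G" by blast
    have "\<exists>g\<in>G. count_list ys g > N"
    proof (rule ccontr)
      assume "\<not> (\<exists>g\<in>G. count_list ys g > N)"
      then have "\<forall>g\<in>G. count_list ys g \<le> N" by auto
      then have "sum (count_list ys) G \<le> card G * N"
        using sum_bounded_above[of G "count_list ys" N] by simp
      moreover have "sum (count_list ys) G = length ys" using sum_count_set[OF ys(3) G(1)] .
      ultimately show False using ys(2) unfolding K_def by simp
    qed
    then obtain g where g: "g \<in> G" "count_list ys g > N" by blast
    have "ng g \<le> N" unfolding N_def using G(1) g(1) by simp
    then have "count_list ys g = ng g + (count_list ys g - ng g)" using g by simp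
    then have "z = g ^ ng g * (g ^ (count_list ys g - ng g) * prod_list (filter (\<lambda>x. x \<noteq> g) ys))"
      using ys(1) prod_list_count[of ys g] by (metis mult.assoc power_add)
    moreover have "sc (g ^ ng g) y = 0" using ng g by blast
    ultimately have "sc z y = 0" by (metis M.scale_scale M.scale_zero_right mult.commute)
    then show "z \<in> ?Z" by simp
  qed
  have "\<forall>q\<in>ideal_pow m K. sc q y = 0"
  proof
    fix q assume q: "q \<in> ideal_pow m K"
    have "{prod_list xs | xs. length xs = K \<and> set xs \<subseteq> m} \<subseteq> ?Z"
    proof
      fix z assume "z \<in> {prod_list xs | xs. length xs = K \<and> set xs \<subseteq> m}"
      then obtain xs where xs: "z = prod_list xs" "length xs = K" "set xs \<subseteq> m" by blast
      have "z \<in> ideal_gen ?Mon" using prod_list_mon[of xs G] xs G(2) by simp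
      then show "z \<in> ?Z" using ideal_gen_least[OF Zi MonZ] by blast
    qed
    then have "ideal_pow m K \<subseteq> ?Z" unfolding ideal_pow_def by (rule ideal_gen_least[OF Zi])
    then show "sc q y = 0" using q by blast
  qed
  then show ?thesis by blast
qed

end

lemma bnd_mono_p: "bnd sc A B p \<Longrightarrow> p \<le> q \<Longrightarrow> bnd sc A B q"
  unfolding bnd_def by (meson order_trans)

lemma module_fun:
  assumes "module sc"
  shows "module (\<lambda>r (f :: 'b \<Rightarrow> 'e::ab_group_add). \<lambda>b. sc r (f b))"
proof -
  interpret M: module sc by (rule assms)
  show ?thesis
    by standard (simp_all add: fun_eq_iff M.scale_right_distrib M.scale_left_distrib)
qed

lemma bnd_linear:
  assumes mA: "module scA" and mB: "module scB" and V: "submod scA V"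
    and add: "\<And>x y. x \<in> V \<Longrightarrow> y \<in> V \<Longrightarrow> f (x + y) = f x + f y"
    and scl: "\<And>r x. x \<in> V \<Longrightarrow> f (scA r x) = scB r (f x)"
    and bK: "bnd scA {0} {x \<in> V. f x = 0} p"
    and bI: "bnd scB {0} (f ` V) q"
  shows "bnd scA {0} V (p + q)"
proof -
  interpret A: module scA by (rule mA)
  interpret B: module scB by (rule mB)
  have V0: "0 \<in> V" using V unfolding submod_def by blast
  have f0: "f 0 = 0" using add[OF V0 V0] by simp
  have fdiff: "f (x - y) = f x - f y" if "x \<in> V" "y \<in> V" for x y
  proof -
    have "x - y \<in> V" using submod_diff[OF mA V that] .
    then have "f ((x - y) + y) = f (x - y) + f y" using add that by blast
    then show ?thesis by (simp add: algebra_simps)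
  qed
  let ?K = "{x \<in> V. f x = 0}"
  have sK: "submod scA ?K"
    unfolding submod_def
  proof (intro conjI ballI allI)
    show "0 \<in> ?K" using V0 f0 by simp
  next
    fix x y assume "x \<in> ?K" "y \<in> ?K"
    then show "x + y \<in> ?K" using add V unfolding submod_def by auto
  next
    fix r x assume "x \<in> ?K"
    then show "scA r x \<in> ?K" using scl V unfolding submod_def by auto
  qed
  have s0: "submod scA {0}" unfolding submod_def by simp
  have bKV: "bnd scA ?K V q"
  proof (rule bnd_map[where f = "\<lambda>X. f ` X" and scB = scB])
    have "f ` ?K = {0}" using V0 f0 by auto
    then show "bnd scB (f ` ?K) (f ` V) q" using bI by simp
  next
    fix X assume X: "submod scA X" "?K \<subseteq> X" "X \<subseteq> V"
    show "submod scB (f ` X)"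
      unfolding submod_def
    proof (intro conjI ballI allI)
      show "0 \<in> f ` X" using X(2) V0 f0 by force
    next
      fix a b assume "a \<in> f ` X" "b \<in> f ` X"
      then obtain x y where "x \<in> X" "y \<in> X" "a = f x" "b = f y" by blast
      moreover have "x + y \<in> X" using calculation X(1) unfolding submod_def by blast
      ultimately show "a + b \<in> f ` X" using add X(3) by (metis image_eqI subsetD)
    next
      fix r a assume "a \<in> f ` X"
      then obtain x where "x \<in> X" "a = f x" by blast
      moreover have "scA r x \<in> X" using calculation X(1) unfolding submod_def by blast
      ultimately show "scB r a \<in> f ` X" using scl X(3) by (metis image_eqI subsetD)
    qed
  next
    fix X Y assume h: "submod scA X" "submod scA Y" "?K \<subseteq> X" "Y \<subseteq> V" "X \<subset> Y"
    show "f ` X \<subset> f ` Y"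
    proof
      show "f ` X \<subseteq> f ` Y" using h by blast
      show "f ` X \<noteq> f ` Y"
      proof
        assume eq: "f ` X = f ` Y"
        obtain y where y: "y \<in> Y" "y \<notin> X" using h(5) by blast
        then obtain x where x: "x \<in> X" "f x = f y" using eq by (metis imageE imageI)
        have xV: "x \<in> V" "y \<in> V" using x y h by auto
        have "y - x \<in> ?K" using fdiff[OF xV(2) xV(1)] x submod_diff[OF mA V xV(2) xV(1)] by simp
        then have "y - x \<in> X" using h by blast
        then have "(y - x) + x \<in> X" using x h(1) unfolding submod_def by blast
        then show False using y by simp
      qed
    qed
  qed
  have "{0} \<subseteq> ?K" using V0 f0 by simp
  moreover have "?K \<subseteq> V" by blast
  ultimately show ?thesis using bnd_add[OF mA sK _ _ bK bKV] by blast
qed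

definition len :: "('r::comm_ring_1 \<Rightarrow> 'v::ab_group_add \<Rightarrow> 'v) \<Rightarrow> 'v set \<Rightarrow> 'v set \<Rightarrow> nat" where
  "len sc A B = Max {n. \<exists>c. schain sc A B n c}"

lemma len_props:
  assumes "bnd sc A B p" "submod sc A" "submod sc B" "A \<subseteq> B"
  shows "(\<exists>c. schain sc A B (len sc A B) c) \<and> bnd sc A B (len sc A B)"
proof -
  let ?S = "{n. \<exists>c. schain sc A B n c}"
  have ne: "?S \<noteq> {}" using schain_exists[OF assms(2-4)] by blast
  have "?S \<subseteq> {..p}" using assms(1) unfolding bnd_def by blast
  then have fin: "finite ?S" by (rule finite_subset) simp
  have "len sc A B \<in> ?S" unfolding len_def using Max_in[OF fin ne] .
  moreover have "bnd sc A B (len sc A B)" unfolding bnd_def len_def using Max_ge[OF fin] by blast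
  ultimately show ?thesis by blast
qed

lemma len_strict:
  assumes "bnd sc A B p" "submod sc A" "submod sc B" "submod sc B'" "A \<subseteq> B'" "B' \<subset> B"
  shows "len sc A B' < len sc A B"
proof -
  have b': "bnd sc A B' p" using bnd_sub[OF assms(1) assms(2,3)] assms(6) by blast
  obtain c where c: "schain sc A B' (len sc A B') c" using len_props[OF b' assms(2,4,5)] by blast
  have "A \<subseteq> B" using assms(5,6) by blast
  then have "bnd sc A B (len sc A B)" using len_props[OF assms(1-3)] by blast
  from bnd_suffix[OF this assms(3) assms(6) c] show ?thesis by simp
qed

context hull
begin

lemma step_len:
  assumes C: "is_ideal C" and mD: "\<forall>a\<in>m. \<forall>d\<in>D. a * d \<in> C" and F: "finite F" "F \<subseteq> D"
    and CD: "C \<subseteq> D"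
  shows "bnd (*) C (ideal_gen (C \<union> F)) (card F)"
  using F
proof (induction F rule: finite_induct)
  case empty
  have "ideal_gen (C \<union> {}) = C" using ideal_gen_of_ideal[OF C] by simp
  moreover have "bnd (*) C C 0" using bnd_refl[of "(*)" C] C is_ideal_submod by blast
  ultimately show ?case by simp
next
  case (insert g F)
  let ?C' = "ideal_gen (C \<union> F)"
  let ?C'' = "ideal_gen (C \<union> insert g F)"
  have IH: "bnd (*) C ?C' (card F)" using insert by simp
  have C'i: "is_ideal ?C'" by (rule ideal_gen_ideal)
  have C''i: "is_ideal ?C''" by (rule ideal_gen_ideal)
  have CC': "C \<subseteq> ?C'" using ideal_gen_sup[of "C \<union> F"] by blast
  have C'C'': "?C' \<subseteq> ?C''" by (rule ideal_gen_mono) blast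
  have eq: "?C'' = {c + r * g | c r. c \<in> ?C'}"
    using ideal_gen_insert[of g "C \<union> F"] by simp
  have gD: "g \<in> D" using insert by simp
  have b1: "bnd (*) ?C' ?C'' 1"
  proof (rule bnd_one)
    fix Y assume Y: "submod (*) Y" "?C' \<subset> Y" "Y \<subseteq> ?C''"
    have Yi: "is_ideal Y" using Y is_ideal_submod by blast
    obtain y where y: "y \<in> Y" "y \<notin> ?C'" using Y by blast
    then obtain c r where cr: "y = c + r * g" "c \<in> ?C'" using Y eq by blast
    have "r \<notin> m"
    proof
      assume "r \<in> m"
      then have "r * g \<in> C" using mD gD by blast
      then have "r * g \<in> ?C'" using CC' by blast
      then have "y \<in> ?C'" using cr ideal_add[OF C'i] by blast
      then show False using y by blast
    qed
    then obtain t where t: "t * r = 1" using local_unit[OF loc] by blast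
    have cY: "c \<in> Y" using cr Y by blast
    have "t * (y - c) = g" using cr t by (simp add: algebra_simps)
    moreover have "t * (y - c) \<in> Y" using ideal_mult[OF Yi ideal_diff[OF Yi y(1) cY]] .
    ultimately have gY: "g \<in> Y" by simp
    have "?C'' \<subseteq> Y"
    proof
      fix w assume "w \<in> ?C''"
      then obtain c2 r2 where "w = c2 + r2 * g" "c2 \<in> ?C'" using eq by blast
      then show "w \<in> Y" using Y gY ideal_add[OF Yi] ideal_mult[OF Yi] by blast
    qed
    then show "Y = ?C''" using Y by blast
  qed
  have "bnd (*) C ?C'' (card F + 1)"
    using bnd_add[OF module_mult _ CC' C'C'' IH b1] C'i is_ideal_submod by blast
  then show ?case using insert by simp
qed

lemma fin_len: "\<exists>p. bnd (*) (ideal_pow m n) UNIV p"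
proof (induction n)
  case 0
  have "submod (*) (UNIV :: 'a set)" using is_ideal_UNIV is_ideal_submod by blast
  then show ?case using bnd_refl ideal_pow_0 by metis
next
  case (Suc n)
  then obtain p where p: "bnd (*) (ideal_pow m n) UNIV p" by blast
  have nn: "\<forall>J::'a set. is_ideal J \<longrightarrow> (\<exists>F. finite F \<and> J = ideal_gen F)"
    using noeth unfolding noetherian_ring_def by simp
  from nn[rule_format, OF ideal_pow_ideal[of m n]] obtain F where F: "finite F" "ideal_pow m n = ideal_gen F"
    by (elim exE conjE)
  let ?C = "ideal_pow m (Suc n)"
  let ?D = "ideal_pow m n"
  have CD: "?C \<subseteq> ?D" by (rule ideal_pow_Suc_sub[OF m_ideal])
  have FD: "F \<subseteq> ?D" using F(2) ideal_gen_sup[of F] by simp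
  have mD: "\<forall>a\<in>m. \<forall>d\<in>?D. a * d \<in> ?C" using ideal_pow_mult[OF m_ideal] by blast
  have "ideal_gen (?C \<union> F) = ?D"
  proof
    show "ideal_gen (?C \<union> F) \<subseteq> ?D" using ideal_gen_least[OF ideal_pow_ideal] CD FD by (metis Un_least)
    show "?D \<subseteq> ideal_gen (?C \<union> F)" using F(2) ideal_gen_mono[of F "?C \<union> F"] by simp
  qed
  then have b: "bnd (*) ?C ?D (card F)" using step_len[OF ideal_pow_ideal mD F(1) FD CD] by simp
  have "bnd (*) ?C UNIV (card F + p)"
    using bnd_add[OF module_mult _ CD _ b p] ideal_pow_ideal is_ideal_submod by blast
  then show ?case by blast
qed

end

definition scF :: "('a::comm_ring_1 \<Rightarrow> 'e::ab_group_add \<Rightarrow> 'e) \<Rightarrow> 'a \<Rightarrow> ('b \<Rightarrow> 'e) \<Rightarrow> ('b \<Rightarrow> 'e)" where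
  "scF sc r f = (\<lambda>b. sc r (f b))"

lemma module_scF: "module sc \<Longrightarrow> module (scF sc)"
proof -
  assume "module sc"
  from module_fun[OF this] show ?thesis
    by (simp add: scF_def[abs_def])
qed

definition HS :: "('a::comm_ring_1 \<Rightarrow> 'e::ab_group_add \<Rightarrow> 'e) \<Rightarrow> 'e set \<Rightarrow> 'a set \<Rightarrow> 'a set \<Rightarrow> ('a \<Rightarrow> 'e) set" where
  "HS sc X A B = {\<psi>. (\<forall>a\<in>B. \<forall>b\<in>B. \<psi> (a + b) = \<psi> a + \<psi> b) \<and> (\<forall>r. \<forall>b\<in>B. \<psi> (r * b) = sc r (\<psi> b))
     \<and> (\<forall>b\<in>B. \<psi> b \<in> X) \<and> (\<forall>a\<in>A. \<psi> a = 0) \<and> (\<forall>b. b \<notin> B \<longrightarrow> \<psi> b = 0)}"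

lemma submod_image:
  assumes mA: "module scA" and V: "submod scA V"
    and add: "\<And>x y. x \<in> V \<Longrightarrow> y \<in> V \<Longrightarrow> f (x + y) = f x + f y"
    and scl: "\<And>r x. x \<in> V \<Longrightarrow> f (scA r x) = scB r (f x)"
  shows "submod scB (f ` V)"
  unfolding submod_def
proof (intro conjI ballI allI)
  have V0: "0 \<in> V" using V unfolding submod_def by blast
  have f0: "f 0 = 0" using add[OF V0 V0] by simp
  show "0 \<in> f ` V" using V0 f0 by force
next
  fix a b assume "a \<in> f ` V" "b \<in> f ` V"
  then obtain x y where h: "x \<in> V" "y \<in> V" "a = f x" "b = f y" by blast
  moreover have "x + y \<in> V" using h V unfolding submod_def by blast
  ultimately show "a + b \<in> f ` V" using add by (metis image_eqI)
next
  fix r a assume "a \<in> f ` V"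
  then obtain x where h: "x \<in> V" "a = f x" by blast
  moreover have "scA r x \<in> V" using h V unfolding submod_def by blast
  ultimately show "scB r a \<in> f ` V" using scl by (metis image_eqI)
qed

lemma submod_zero: "module sc \<Longrightarrow> submod sc {0}"
  unfolding submod_def using module.scale_zero_right by fastforce

context hull
begin

lemma HS_submod:
  assumes X: "submod sc X"
  shows "submod (scF sc) (HS sc X A B)"
  unfolding submod_def
proof (intro conjI ballI allI)
  show "0 \<in> HS sc X A B" unfolding HS_def using X unfolding submod_def by simp
next
  fix f g assume f: "f \<in> HS sc X A B" and g: "g \<in> HS sc X A B"
  show "f + g \<in> HS sc X A B"
    unfolding HS_def
  proof (intro CollectI conjI ballI allI impI)
    fix a b assume "a \<in> B" "b \<in> B"
    then show "(f + g) (a + b) = (f + g) a + (f + g) b" using f g unfolding HS_def by (simp add: algebra_simps)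
  next
    fix r b assume "b \<in> B"
    then show "(f + g) (r * b) = sc r ((f + g) b)" using f g unfolding HS_def by (simp add: M.scale_right_distrib)
  next
    fix b assume "b \<in> B"
    then have "f b \<in> X" "g b \<in> X" using f g unfolding HS_def by auto
    then show "(f + g) b \<in> X" using X unfolding submod_def by simp
  next
    fix a assume "a \<in> A" then show "(f + g) a = 0" using f g unfolding HS_def by simp
  next
    fix b assume "b \<notin> B" then show "(f + g) b = 0" using f g unfolding HS_def by simp
  qed
next
  fix r f assume f: "f \<in> HS sc X A B"
  show "scF sc r f \<in> HS sc X A B"
    unfolding HS_def scF_def
  proof (intro CollectI conjI ballI allI impI)
    fix a b assume "a \<in> B" "b \<in> B"
    then show "sc r (f (a + b)) = sc r (f a) + sc r (f b)" using f unfolding HS_def by (simp add: M.scale_right_distrib)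
  next
    fix s b assume "b \<in> B"
    then have "f (s * b) = sc s (f b)" using f unfolding HS_def by blast
    then show "sc r (f (s * b)) = sc s (sc r (f b))" by (simp add: mult.commute)
  next
    fix b assume "b \<in> B"
    then have "f b \<in> X" using f unfolding HS_def by auto
    then show "sc r (f b) \<in> X" using X unfolding submod_def by simp
  next
    fix a assume "a \<in> A" then show "sc r (f a) = 0" using f unfolding HS_def by simp
  next
    fix b assume "b \<notin> B" then show "sc r (f b) = 0" using f unfolding HS_def by simp
  qed
qed

lemma HS_eq0:
  assumes "\<psi> \<in> HS sc X A B" "\<forall>b\<in>B. \<psi> b = 0"
  shows "\<psi> = 0"
proof
  fix b show "\<psi> b = 0 b" using assms unfolding HS_def by (cases "b \<in> B") auto
qed

lemma HS_AA: "0 \<in> X \<Longrightarrow> HS sc X A A = {0}"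
proof
  show "HS sc X A A \<subseteq> {0}" using HS_eq0 unfolding HS_def by blast
next
  assume "0 \<in> X"
  then have "0 \<in> HS sc X A A" unfolding HS_def by simp
  then show "{0} \<subseteq> HS sc X A A" by blast
qed

lemma HS_bound:
  assumes X: "submod sc X"
  shows "bnd (*) A B p \<Longrightarrow> is_ideal A \<Longrightarrow> is_ideal B \<Longrightarrow> A \<subseteq> B \<Longrightarrow> bnd (scF sc) {0} (HS sc X A B) p"
proof (induction p arbitrary: A)
  have mF: "module (scF sc)" by (rule module_scF[OF md])
  have s0: "submod (scF sc) {0 :: 'a \<Rightarrow> 'e}" by (rule submod_zero[OF mF])
  have X0: "0 \<in> X" using X unfolding submod_def by blast
  {
    case 0
    have "A = B"
    proof (rule ccontr)
      assume "A \<noteq> B"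
      then have "A \<subset> B" using 0 by blast
      moreover have "submod (*) A" "submod (*) B" using 0 is_ideal_submod by blast+
      ultimately have "schain (*) A B 1 (\<lambda>i. if i = 0 then A else B)" using schain1 by blast
      then show False using 0(1) unfolding bnd_def by fastforce
    qed
    then have eq: "HS sc X A B = {0}" using HS_AA[OF X0] by blast
    show ?case by (subst eq) (rule bnd_refl[OF s0])
  next
    case (Suc p)
    show ?case
    proof (cases "A = B")
      case True
      then have eq: "HS sc X A B = {0}" using HS_AA[OF X0] by blast
      show ?thesis by (subst eq) (rule bnd_mono_p[OF bnd_refl[OF s0]], simp)
    next
      case False
      have sA: "submod (*) A" and sB: "submod (*) B" using Suc.prems is_ideal_submod by auto
      obtain N c where Nc: "schain (*) A B N c" "bnd (*) A B N"
        using len_props[OF Suc.prems(1) sA sB Suc.prems(4)] by blast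
      have "N \<noteq> 0" using Nc(1) False unfolding schain_def by auto
      then obtain N' where N': "N = Suc N'" by (cases N) auto
      define c1 where "c1 = c 1"
      have "submod (*) (c 1)" using Nc(1) N' unfolding schain_def by simp
      then have c1i: "is_ideal c1" using is_ideal_submod unfolding c1_def by blast
      have Ac1: "A \<subset> c1" using schain_strict[OF Nc(1), of 0 1] N' unfolding c1_def using Nc(1) unfolding schain_def by auto
      have c1B: "c1 \<subseteq> B" using schain_in[OF Nc(1), of 1] N' c1_def by simp
      have tl: "schain (*) c1 B N' (\<lambda>i. c (Suc i))" using schain_tl[OF Nc(1)[unfolded N']] c1_def by simp
      have simple: False if Y: "is_ideal Y" "A \<subset> Y" "Y \<subset> c1" for Y
      proof -
        have sY: "submod (*) Y" using Y is_ideal_submod by blast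
        have sc1: "submod (*) c1" using c1i is_ideal_submod by blast
        from schain_append[OF schain_append[OF schain1[OF sA sY Y(2)] schain1[OF sY sc1 Y(3)]] tl]
        have "1 + 1 + N' \<le> N" using Nc(2) unfolding bnd_def by blast
        then show False using N' by simp
      qed
      have bc1: "bnd (*) c1 B p"
        unfolding bnd_def
      proof (intro allI impI)
        fix k d assume "schain (*) c1 B k d"
        from bnd_prefix[OF Suc.prems(1) sA Ac1 this] show "k \<le> p" by simp
      qed
      have IH: "bnd (scF sc) {0} (HS sc X c1 B) p" using Suc.IH[OF bc1 c1i Suc.prems(3) c1B] .
      obtain b where b: "b \<in> c1" "b \<notin> A" using Ac1 by blast
      have mb: "\<forall>t\<in>m. t * b \<in> A"
      proof -
        let ?Y = "{a + t * b | a t. a \<in> A \<and> t \<in> m}"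
        have Yi: "is_ideal ?Y"
          unfolding is_ideal_def
        proof (intro conjI allI ballI impI)
          have "(0::'a) = 0 + 0 * b" by simp
          then show "0 \<in> ?Y" using ideal_0[OF Suc.prems(2)] ideal_0[OF m_ideal] by blast
        next
          fix x y assume "x \<in> ?Y" "y \<in> ?Y"
          then obtain a t a' t' where h: "x = a + t * b" "y = a' + t' * b" "a \<in> A" "t \<in> m" "a' \<in> A" "t' \<in> m" by blast
          then have "x + y = (a + a') + (t + t') * b" by (simp add: algebra_simps)
          moreover have "a + a' \<in> A" "t + t' \<in> m" using h ideal_add[OF Suc.prems(2)] ideal_add[OF m_ideal] by blast+
          ultimately show "x + y \<in> ?Y" by blast
        next
          fix s x assume "x \<in> ?Y"
          then obtain a t where h: "x = a + t * b" "a \<in> A" "t \<in> m" by blast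
          then have "s * x = s * a + (s * t) * b" by (simp add: algebra_simps)
          moreover have "s * a \<in> A" "s * t \<in> m" using h ideal_mult[OF Suc.prems(2)] ideal_mult[OF m_ideal] by blast+
          ultimately show "s * x \<in> ?Y" by blast
        qed
        have AY: "A \<subseteq> ?Y"
        proof
          fix a assume "a \<in> A"
          moreover have "a = a + 0 * b" by simp
          ultimately show "a \<in> ?Y" using ideal_0[OF m_ideal] by blast
        qed
        have Yc1: "?Y \<subseteq> c1"
        proof
          fix y assume "y \<in> ?Y"
          then obtain a t where "y = a + t * b" "a \<in> A" by blast
          then show "y \<in> c1" using Ac1 b ideal_add[OF c1i] ideal_mult[OF c1i] by blast
        qed
        have "?Y = A"
        proof (rule ccontr)
          assume "?Y \<noteq> A"
          then have AsY: "A \<subset> ?Y" using AY by blast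
          have "?Y = c1" using simple[OF Yi AsY] Yc1 by blast
          then have "b \<in> ?Y" using b by blast
          then obtain a t where h: "b = a + t * b" "a \<in> A" "t \<in> m" by blast
          obtain s where s: "s * (1 - t) = 1" using local_one_minus[OF loc h(3)] by blast
          have "(1 - t) * b = a" using h(1) by (simp add: algebra_simps)
          then have "s * a = b" using s by (metis mult.assoc mult_1)
          then have "b \<in> A" using ideal_mult[OF Suc.prems(2) h(2)] by metis
          then show False using b by blast
        qed
        moreover have "t * b \<in> ?Y" if "t \<in> m" for t
        proof -
          have "t * b = 0 + t * b" by simp
          then show ?thesis using that ideal_0[OF Suc.prems(2)] by blast
        qed
        ultimately show ?thesis by blast
      qed
      have c1eq: "c1 = {a + r * b | a r. a \<in> A}"
      proof -
        let ?Y = "{a + r * b | a r. a \<in> A}"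
        have Yi: "is_ideal ?Y"
          unfolding is_ideal_def
        proof (intro conjI allI ballI impI)
          have "(0::'a) = 0 + 0 * b" by simp
          then show "0 \<in> ?Y" using ideal_0[OF Suc.prems(2)] by blast
        next
          fix x y assume "x \<in> ?Y" "y \<in> ?Y"
          then obtain a t a' t' where h: "x = a + t * b" "y = a' + t' * b" "a \<in> A" "a' \<in> A" by blast
          then have "x + y = (a + a') + (t + t') * b" by (simp add: algebra_simps)
          moreover have "a + a' \<in> A" using h ideal_add[OF Suc.prems(2)] by blast
          ultimately show "x + y \<in> ?Y" by blast
        next
          fix s x assume "x \<in> ?Y"
          then obtain a t where h: "x = a + t * b" "a \<in> A" by blast
          then have "s * x = s * a + (s * t) * b" by (simp add: algebra_simps)
          moreover have "s * a \<in> A" using h ideal_mult[OF Suc.prems(2)] by blast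
          ultimately show "s * x \<in> ?Y" by blast
        qed
        have AY: "A \<subseteq> ?Y"
        proof
          fix a assume "a \<in> A"
          moreover have "a = a + 0 * b" by simp
          ultimately show "a \<in> ?Y" by blast
        qed
        have bY: "b \<in> ?Y"
        proof -
          have "b = 0 + 1 * b" by simp
          then show ?thesis using ideal_0[OF Suc.prems(2)] by blast
        qed
        have Yc1: "?Y \<subseteq> c1"
        proof
          fix y assume "y \<in> ?Y"
          then obtain a t where "y = a + t * b" "a \<in> A" by blast
          then show "y \<in> c1" using Ac1 b ideal_add[OF c1i] ideal_mult[OF c1i] by blast
        qed
        have "A \<subset> ?Y" using AY bY b by blast
        then show ?thesis using simple[OF Yi] Yc1 by blast
      qed
      have det: "\<psi> d = sc r (\<psi> b)" if "\<psi> \<in> HS sc X A c1" "a \<in> A" "d = a + r * b" for \<psi> d a r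
      proof -
        have "a \<in> c1" "r * b \<in> c1" using that Ac1 b ideal_mult[OF c1i] by blast+
        then have "\<psi> d = \<psi> a + \<psi> (r * b)" using that unfolding HS_def by blast
        then show ?thesis using that b unfolding HS_def by simp
      qed
      have annb: "\<forall>t\<in>m. sc t (\<psi> b) = 0" if "\<psi> \<in> HS sc X A c1" for \<psi>
      proof
        fix t assume "t \<in> m"
        then have "t * b \<in> A" using mb by blast
        then have "\<psi> (t * b) = 0" using that unfolding HS_def by blast
        then show "sc t (\<psi> b) = 0" using that b unfolding HS_def by simp
      qed
      have b1: "bnd (scF sc) {0} (HS sc X A c1) 1"
      proof (rule bnd_one)
        fix Y assume Y: "submod (scF sc) Y" "{0} \<subset> Y" "Y \<subseteq> HS sc X A c1"
        obtain \<psi>0 where p0: "\<psi>0 \<in> Y" "\<psi>0 \<noteq> 0" using Y by blast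
        have p0H: "\<psi>0 \<in> HS sc X A c1" using p0 Y by blast
        have "\<psi>0 b \<noteq> 0"
        proof
          assume z: "\<psi>0 b = 0"
          have "\<forall>d\<in>c1. \<psi>0 d = 0"
          proof
            fix d assume "d \<in> c1"
            then obtain a r where "d = a + r * b" "a \<in> A" using c1eq by blast
            then show "\<psi>0 d = 0" using det[OF p0H] z by simp
          qed
          then show False using HS_eq0[OF p0H] p0 by blast
        qed
        then have "range (\<lambda>r. sc r (\<psi>0 b)) \<noteq> {0}" using in_cyc_self[of "\<psi>0 b"] by blast
        then have "u \<in> range (\<lambda>r. sc r (\<psi>0 b))" using u_in[OF cyc_submod] by blast
        then obtain s' where s': "u = sc s' (\<psi>0 b)" by blast
        show "Y = HS sc X A c1"
        proof
          show "HS sc X A c1 \<subseteq> Y"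
          proof
            fix \<phi> assume ph: "\<phi> \<in> HS sc X A c1"
            obtain t where t: "\<phi> b = sc t u" using soc[OF annb[OF ph]] by blast
            have "\<phi> = scF sc (t * s') \<psi>0"
            proof
              fix d
              show "\<phi> d = scF sc (t * s') \<psi>0 d"
              proof (cases "d \<in> c1")
                case True
                then obtain a r where ar: "d = a + r * b" "a \<in> A" using c1eq by blast
                have "\<phi> d = sc r (\<phi> b)" using det[OF ph ar(2,1)] .
                moreover have "\<psi>0 d = sc r (\<psi>0 b)" using det[OF p0H ar(2,1)] .
                ultimately show ?thesis using t s' unfolding scF_def by (simp add: mult.commute mult.left_commute)
              next
                case False
                then show ?thesis using ph p0H unfolding HS_def scF_def by simp
              qed
            qed
            then show "\<phi> \<in> Y" using Y(1) p0(1) unfolding submod_def by simp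
          qed
        qed (use Y in blast)
      qed
      define res where "res \<psi> = (\<lambda>d. if d \<in> c1 then \<psi> d else 0)" for \<psi> :: "'a \<Rightarrow> 'e"
      have resH: "res \<psi> \<in> HS sc X A c1" if "\<psi> \<in> HS sc X A B" for \<psi>
        unfolding HS_def res_def
      proof (intro CollectI conjI ballI allI impI)
        fix a d assume "a \<in> c1" "d \<in> c1"
        moreover have "a + d \<in> c1" using calculation ideal_add[OF c1i] by blast
        moreover have "a \<in> B" "d \<in> B" using calculation c1B by blast+
        moreover have "\<psi> (a + d) = \<psi> a + \<psi> d" using calculation that unfolding HS_def by blast
        ultimately show "(if a + d \<in> c1 then \<psi> (a + d) else 0) = (if a \<in> c1 then \<psi> a else 0) + (if d \<in> c1 then \<psi> d else 0)"
          by simp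
      next
        fix r d assume "d \<in> c1"
        moreover have "r * d \<in> c1" using calculation ideal_mult[OF c1i] by blast
        moreover have "d \<in> B" using calculation c1B by blast
        moreover have "\<psi> (r * d) = sc r (\<psi> d)" using calculation that unfolding HS_def by blast
        ultimately show "(if r * d \<in> c1 then \<psi> (r * d) else 0) = sc r (if d \<in> c1 then \<psi> d else 0)"
          by simp
      next
        fix d assume "d \<in> c1"
        moreover have "d \<in> B" using calculation c1B by blast
        ultimately show "(if d \<in> c1 then \<psi> d else 0) \<in> X" using that unfolding HS_def by simp
      next
        fix a assume "a \<in> A"
        then show "(if a \<in> c1 then \<psi> a else 0) = 0" using that unfolding HS_def by auto
      next
        fix d assume "d \<notin> c1"
        then show "(if d \<in> c1 then \<psi> d else 0) = 0" by simp
      qed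
      have kerH: "{\<psi> \<in> HS sc X A B. res \<psi> = 0} \<subseteq> HS sc X c1 B"
      proof
        fix \<psi> assume h: "\<psi> \<in> {\<psi> \<in> HS sc X A B. res \<psi> = 0}"
        then have r0: "res \<psi> = 0" by blast
        have z: "\<forall>d\<in>c1. \<psi> d = 0"
        proof
          fix d assume d: "d \<in> c1"
          have "res \<psi> d = 0" using r0 by simp
          then show "\<psi> d = 0" using d unfolding res_def by simp
        qed
        show "\<psi> \<in> HS sc X c1 B" using h z unfolding HS_def by blast
      qed
      have bK: "bnd (scF sc) {0} {\<psi> \<in> HS sc X A B. res \<psi> = 0} p"
        using bnd_sub[OF IH s0 HS_submod[OF X] _ kerH] by blast
      have bI: "bnd (scF sc) {0} (res ` HS sc X A B) 1"
        using bnd_sub[OF b1 s0 HS_submod[OF X], of "{0}" "res ` HS sc X A B"] resH by blast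
      have "bnd (scF sc) {0} (HS sc X A B) (p + 1)"
      proof (rule bnd_linear[OF mF mF HS_submod[OF X] _ _ bK bI])
        fix f g :: "'a \<Rightarrow> 'e"
        show "res (f + g) = res f + res g" unfolding res_def by (simp add: fun_eq_iff)
      next
        fix r and f :: "'a \<Rightarrow> 'e"
        show "res (scF sc r f) = scF sc r (res f)" unfolding res_def scF_def by (simp add: fun_eq_iff)
      qed
      then show ?thesis by (metis Suc_eq_plus1)
    qed
  }
qed

end

lemma submod_sum: "submod sc N \<Longrightarrow> (\<And>z. z \<in> S \<Longrightarrow> f z \<in> N) \<Longrightarrow> sum f S \<in> N"
proof (induction S rule: infinite_finite_induct)
  case (infinite A) then show ?case unfolding submod_def by simp
next
  case empty then show ?case unfolding submod_def by simp
next
  case (insert x F)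
  have "f x \<in> N" "sum f F \<in> N" using insert by auto
  then show ?case using insert(1,2,4) unfolding submod_def by simp
qed

context hull
begin

lemma gor:
  assumes hy: "\<forall>r. sc r x = 0 \<longrightarrow> sc r y = 0"
  shows "\<exists>s. y = sc s x"
proof (cases "x = 0")
  case True
  then have "sc 1 y = 0" using hy by simp
  then show ?thesis using True by (metis M.scale_one M.scale_zero_right)
next
  case xnz: False
  let ?X = "range (\<lambda>r. sc r x)"
  let ?J = "{r. sc r x = 0}"
  let ?Q = "ideal_pow m"
  have Ji: "is_ideal ?J"
    unfolding is_ideal_def
  proof (intro conjI allI ballI impI)
    show "0 \<in> ?J" by simp
  next
    fix a b assume "a \<in> ?J" "b \<in> ?J" then show "a + b \<in> ?J" by (simp add: M.scale_left_distrib)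
  next
    fix r a assume "a \<in> ?J"
    then have "sc r (sc a x) = 0" by simp
    then show "r * a \<in> ?J" by simp
  qed
  have J1: "1 \<notin> ?J" using xnz by simp
  have Jm: "?J \<subseteq> m" using local_proper_sub[OF loc Ji J1] .
  have sX: "submod sc ?X" by (rule cyc_submod)
  have s0: "submod (scF sc) {0 :: 'a \<Rightarrow> 'e}" by (rule submod_zero[OF module_scF[OF md]])
  have sJ: "submod (*) ?J" using Ji is_ideal_submod by blast
  have sU: "submod (*) (UNIV :: 'a set)" using is_ideal_UNIV is_ideal_submod by blast
  have sm: "submod (*) m" using m_ideal is_ideal_submod by blast
  obtain Kx where Kx: "\<forall>q\<in>?Q Kx. sc q x = 0" using torsion by blast
  obtain p0 where p0: "bnd (*) (?Q Kx) UNIV p0" using fin_len by blast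
  have "bnd (*) ?J UNIV p0"
    using bnd_sub[OF p0 _ sU, of ?J UNIV] ideal_pow_ideal is_ideal_submod Kx by blast
  then obtain cJ where cJ: "schain (*) ?J UNIV (len (*) ?J UNIV) cJ" and bJ: "bnd (*) ?J UNIV (len (*) ?J UNIV)"
    using len_props[OF _ sJ sU] by blast
  define n where "n = len (*) ?J UNIV"
  have JU: "?J \<subset> UNIV" using J1 by blast
  have n1: "1 \<le> n" using bnd_prefix[OF bJ sJ JU schain0[OF sU]] n_def by simp
  have mU: "m \<subset> UNIV" using one_notin_m by blast
  have bJm: "bnd (*) ?J m (n - 1)"
    unfolding bnd_def
  proof (intro allI impI)
    fix k d assume "schain (*) ?J m k d"
    from bnd_suffix[OF bJ sU mU this] show "k \<le> n - 1" using n_def by simp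
  qed
  have HB: "bnd (scF sc) {0} (HS sc ?X ?J m) (n - 1)"
    using HS_bound[OF sX bJm Ji m_ideal Jm] .
  define f where "f A = (\<lambda>a. sc a x) ` A" for A
  have Xch: "schain sc (f ?J) (f UNIV) n (\<lambda>i. f (cJ i))"
  proof (rule schain_map[of "(*)" ?J UNIV n cJ sc f])
    show "schain (*) ?J UNIV n cJ" using cJ n_def by simp
  next
    fix A assume A: "submod (*) (A :: 'a set)" "?J \<subseteq> A" "A \<subseteq> UNIV"
    show "submod sc (f A)" unfolding f_def
      by (rule submod_image[OF module_mult A(1)]) (simp_all add: M.scale_left_distrib)
  next
    fix A B assume h: "submod (*) (A :: 'a set)" "submod (*) B" "?J \<subseteq> A" "B \<subseteq> UNIV" "A \<subset> B"
    show "f A \<subset> f B"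
    proof
      show "f A \<subseteq> f B" unfolding f_def using h by blast
      show "f A \<noteq> f B"
      proof
        assume eq: "f A = f B"
        obtain b where b: "b \<in> B" "b \<notin> A" using h by blast
        then have "sc b x \<in> f A" using eq unfolding f_def by blast
        then obtain a where a': "sc b x = sc a x" "a \<in> A" unfolding f_def by (rule imageE)
        then have a: "a \<in> A" "sc a x = sc b x" by simp_all
        then have "sc (b - a) x = 0" by (simp add: M.scale_left_diff_distrib)
        then have "b - a \<in> A" using h by blast
        then have "(b - a) + a \<in> A" using a h(1) unfolding submod_def by blast
        then show False using b by simp
      qed
    qed
  qed
  have fJ: "f ?J = {0}"
  proof
    show "f ?J \<subseteq> {0}" unfolding f_def by auto
    have "(0::'a) \<in> ?J" by simp
    then have "sc 0 x \<in> f ?J" unfolding f_def by (rule imageI)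
    then show "{0} \<subseteq> f ?J" by simp
  qed
  have fU: "f UNIV = ?X" unfolding f_def by simp
  have Xch': "schain sc {0} ?X n (\<lambda>i. f (cJ i))" using Xch fJ fU by simp
  have main: "\<forall>y. (\<forall>r. sc r x = 0 \<longrightarrow> sc r y = 0) \<longrightarrow> (\<forall>q\<in>?Q k. sc q y = 0) \<longrightarrow> y \<in> ?X" for k
  proof (induction k)
    case 0
    show ?case
    proof (intro allI impI)
      fix y assume "\<forall>q\<in>?Q 0. sc q y = 0"
      then have "sc 1 y = 0" using ideal_pow_0 by blast
      then have "y = sc 0 x" by simp
      then show "y \<in> ?X" by blast
    qed
  next
    case (Suc k)
    show ?case
    proof (intro allI impI)
      fix y assume hJ: "\<forall>r. sc r x = 0 \<longrightarrow> sc r y = 0" and hQ: "\<forall>q\<in>?Q (Suc k). sc q y = 0"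
      have may: "sc a y \<in> ?X" if a: "a \<in> m" for a
      proof -
        have "\<forall>r. sc r x = 0 \<longrightarrow> sc r (sc a y) = 0" using hJ M.scale_left_commute by (metis M.scale_zero_right)
        moreover have "\<forall>q\<in>?Q k. sc q (sc a y) = 0"
        proof
          fix q assume "q \<in> ?Q k"
          then have "a * q \<in> ?Q (Suc k)" using ideal_pow_mult[OF m_ideal a] by blast
          then have "sc (a * q) y = 0" using hQ by blast
          then show "sc q (sc a y) = 0" by (simp add: mult.commute)
        qed
        ultimately show ?thesis using Suc.IH by blast
      qed
      define \<phi> where "\<phi> = (\<lambda>a. if a \<in> m then sc a y else 0)"
      define \<rho> where "\<rho> z = (\<lambda>a. if a \<in> m then sc a z else 0)" for z
      have phiH: "\<phi> \<in> HS sc ?X ?J m"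
        unfolding HS_def \<phi>_def
      proof (intro CollectI conjI ballI allI impI)
        fix a b assume "a \<in> m" "b \<in> m"
        moreover have "a + b \<in> m" using calculation ideal_add[OF m_ideal] by blast
        ultimately show "(if a + b \<in> m then sc (a + b) y else 0) = (if a \<in> m then sc a y else 0) + (if b \<in> m then sc b y else 0)"
          by (simp add: M.scale_left_distrib)
      next
        fix r b assume "b \<in> m"
        moreover have "r * b \<in> m" using calculation ideal_mult[OF m_ideal] by blast
        ultimately show "(if r * b \<in> m then sc (r * b) y else 0) = sc r (if b \<in> m then sc b y else 0)" by simp
      next
        fix b assume "b \<in> m"
        then show "(if b \<in> m then sc b y else 0) \<in> ?X" using may by simp
      next
        fix a assume "a \<in> ?J"
        then show "(if a \<in> m then sc a y else 0) = 0" using hJ by simp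
      next
        fix b assume "b \<notin> m" then show "(if b \<in> m then sc b y else 0) = 0" by simp
      qed
      have rhoH: "\<rho> z \<in> HS sc ?X ?J m" if z: "z \<in> ?X" for z
        unfolding HS_def \<rho>_def
      proof (intro CollectI conjI ballI allI impI)
        fix a b assume "a \<in> m" "b \<in> m"
        moreover have "a + b \<in> m" using calculation ideal_add[OF m_ideal] by blast
        ultimately show "(if a + b \<in> m then sc (a + b) z else 0) = (if a \<in> m then sc a z else 0) + (if b \<in> m then sc b z else 0)"
          by (simp add: M.scale_left_distrib)
      next
        fix r b assume "b \<in> m"
        moreover have "r * b \<in> m" using calculation ideal_mult[OF m_ideal] by blast
        ultimately show "(if r * b \<in> m then sc (r * b) z else 0) = sc r (if b \<in> m then sc b z else 0)" by simp
      next
        fix b assume "b \<in> m"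
        have "sc b z \<in> ?X" using z sX unfolding submod_def by blast
        then show "(if b \<in> m then sc b z else 0) \<in> ?X" using \<open>b \<in> m\<close> by simp
      next
        fix a assume a: "a \<in> ?J"
        obtain s where s: "z = sc s x" using z by blast
        have e1: "sc a z = sc s (sc a x)" using s by (simp add: mult.commute)
        have "sc a x = 0" using a by simp
        then have e2: "sc s (sc a x) = 0" by simp
        have "sc a z = 0" using e1 e2 by (rule trans)
        then show "(if a \<in> m then sc a z else 0) = 0" by simp
      next
        fix b assume "b \<notin> m" then show "(if b \<in> m then sc b z else 0) = 0" by simp
      qed
      have radd: "\<rho> (z + w) = \<rho> z + \<rho> w" for z w
        unfolding \<rho>_def by (simp add: fun_eq_iff M.scale_right_distrib)
      have rscl: "\<rho> (sc r z) = scF sc r (\<rho> z)" for r z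
        unfolding \<rho>_def scF_def by (simp add: fun_eq_iff mult.commute)
      have "\<phi> \<in> \<rho> ` ?X"
      proof (rule ccontr)
        assume nin: "\<phi> \<notin> \<rho> ` ?X"
        have sR: "submod (scF sc) (\<rho> ` ?X)"
          by (rule submod_image[OF md sX]) (simp_all add: radd rscl)
        have RH: "\<rho> ` ?X \<subseteq> HS sc ?X ?J m" using rhoH by blast
        have RHs: "\<rho> ` ?X \<subset> HS sc ?X ?J m" using RH nin phiH by blast
        have bR: "bnd (scF sc) {0} (\<rho> ` ?X) (n - 1)"
          using bnd_sub[OF HB s0 HS_submod[OF sX], of "{0}" "\<rho> ` ?X"] RH by blast
        have z0: "{0} \<subseteq> \<rho> ` ?X" using sR unfolding submod_def by blast
        obtain c' where c': "schain (scF sc) {0} (\<rho> ` ?X) (len (scF sc) {0} (\<rho> ` ?X)) c'"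
          and bR': "bnd (scF sc) {0} (\<rho> ` ?X) (len (scF sc) {0} (\<rho> ` ?X))"
          using len_props[OF bR s0 sR z0] by blast
        define k' where "k' = len (scF sc) {0} (\<rho> ` ?X)"
        from schain_append[OF c' schain1[OF sR HS_submod[OF sX] RHs]]
        have k'b: "k' + 1 \<le> n - 1" using HB k'_def unfolding bnd_def by blast
        have bker: "bnd sc {0} {z \<in> ?X. \<rho> z = 0} 1"
        proof (rule bnd_one)
          fix Y assume Y: "submod sc Y" "{0} \<subset> Y" "Y \<subseteq> {z \<in> ?X. \<rho> z = 0}"
          have uY: "u \<in> Y" using u_in[OF Y(1)] Y(2) by blast
          show "Y = {z \<in> ?X. \<rho> z = 0}"
          proof
            show "Y \<subseteq> {z \<in> ?X. \<rho> z = 0}" using Y by blast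
            show "{z \<in> ?X. \<rho> z = 0} \<subseteq> Y"
            proof
              fix z assume z: "z \<in> {z \<in> ?X. \<rho> z = 0}"
              have "\<forall>a\<in>m. sc a z = 0"
              proof
                fix a assume a: "a \<in> m"
                have "\<rho> z a = 0" using z by simp
                then show "sc a z = 0" using a unfolding \<rho>_def by simp
              qed
              then obtain t where "z = sc t u" using soc by blast
              then show "z \<in> Y" using uY Y(1) unfolding submod_def by blast
            qed
          qed
        qed
        have "bnd sc {0} ?X (1 + k')"
          using bnd_linear[OF md module_scF[OF md] sX _ _ bker bR'[folded k'_def]] radd rscl by blast
        then have "n \<le> 1 + k'" using Xch' unfolding bnd_def by blast
        then show False using k'b n1 by simp
      qed
      then obtain z where z: "z \<in> ?X" "\<phi> = \<rho> z" by blast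
      have "\<forall>a\<in>m. sc a (y - z) = 0"
      proof
        fix a assume a: "a \<in> m"
        have "\<phi> a = \<rho> z a" using z by simp
        then have "sc a y = sc a z" using a unfolding \<phi>_def \<rho>_def by simp
        then show "sc a (y - z) = 0" by (simp add: M.scale_right_diff_distrib)
      qed
      then obtain t where t: "y - z = sc t u" using soc by blast
      have "?X \<noteq> {0}" using in_cyc_self[of x] xnz by blast
      then have "u \<in> ?X" using u_in[OF sX] by blast
      then have "sc t u \<in> ?X" using sX unfolding submod_def by blast
      then have "y - z \<in> ?X" using t by simp
      then have "z + (y - z) \<in> ?X" using z(1) sX unfolding submod_def by blast
      then show "y \<in> ?X" by simp
    qed
  qed
  obtain Ky where "\<forall>q\<in>?Q Ky. sc q y = 0" using torsion by blast
  then have "y \<in> ?X" using main hy by blast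
  then show ?thesis by blast
qed

lemma fg:
  assumes "finite S"
  shows "\<forall>y. (\<forall>r. (\<forall>z\<in>S. sc r z = 0) \<longrightarrow> sc r y = 0) \<longrightarrow> (\<exists>c. y = (\<Sum>z\<in>S. sc (c z) z))"
  using assms
proof (induction S rule: finite_induct)
  case empty
  show ?case
  proof (intro allI impI)
    fix y assume "\<forall>r. (\<forall>z\<in>{}. sc r z = 0) \<longrightarrow> sc r y = 0"
    then have "sc 1 y = 0" by blast
    then show "\<exists>c. y = (\<Sum>z\<in>{}. sc (c z) z)" by simp
  qed
next
  case (insert x S)
  show ?case
  proof (intro allI impI)
    fix y assume hy: "\<forall>r. (\<forall>z\<in>insert x S. sc r z = 0) \<longrightarrow> sc r y = 0"
    let ?A = "{r. \<forall>z\<in>S. sc r z = 0}"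
    let ?B = "{r. sc r x = 0}"
    have Ai: "is_ideal ?A"
      unfolding is_ideal_def
    proof (intro conjI allI ballI impI)
      show "0 \<in> ?A" by simp
    next
      fix a b assume "a \<in> ?A" "b \<in> ?A" then show "a + b \<in> ?A" by (simp add: M.scale_left_distrib)
    next
      fix r a assume "a \<in> ?A"
      then show "r * a \<in> ?A" by (simp flip: M.scale_scale)
    qed
    have Bi: "is_ideal ?B"
      unfolding is_ideal_def
    proof (intro conjI allI ballI impI)
      show "0 \<in> ?B" by simp
    next
      fix a b assume "a \<in> ?B" "b \<in> ?B" then show "a + b \<in> ?B" by (simp add: M.scale_left_distrib)
    next
      fix r a assume "a \<in> ?B"
      then show "r * a \<in> ?B" by (simp flip: M.scale_scale)
    qed
    have "\<forall>c\<in>?A \<inter> ?B. sc c y = 0" using hy by blast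
    then obtain y1 y2 where y12: "y = y1 + y2" "\<forall>a\<in>?A. sc a y1 = 0" "\<forall>b\<in>?B. sc b y2 = 0"
      using ann_split[OF Ai Bi] by blast
    have "\<forall>r. (\<forall>z\<in>S. sc r z = 0) \<longrightarrow> sc r y1 = 0" using y12(2) by blast
    then obtain c where c: "y1 = (\<Sum>z\<in>S. sc (c z) z)" using insert.IH by blast
    have "\<forall>r. sc r x = 0 \<longrightarrow> sc r y2 = 0" using y12(3) by blast
    then obtain s where s: "y2 = sc s x" using gor by blast
    define c' where "c' = c(x := s)"
    have "(\<Sum>z\<in>insert x S. sc (c' z) z) = sc (c' x) x + (\<Sum>z\<in>S. sc (c' z) z)"
      using insert(1,2) by simp
    also have "(\<Sum>z\<in>S. sc (c' z) z) = (\<Sum>z\<in>S. sc (c z) z)"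
      using insert(2) unfolding c'_def by (intro sum.cong) auto
    finally have "(\<Sum>z\<in>insert x S. sc (c' z) z) = y2 + y1" using s c c'_def by simp
    then show "\<exists>c. y = (\<Sum>z\<in>insert x S. sc (c z) z)" using y12(1) by (metis add.commute)
  qed
qed

end

locale chull = hull +
  assumes compl: "madic_complete m"
begin

lemma matlis:
  assumes M: "submod sc M" and e: "e \<notin> M"
  shows "\<exists>r. (\<forall>z\<in>M. sc r z = 0) \<and> sc r e \<noteq> 0"
proof -
  let ?Q = "ideal_pow m"
  define Cs where "Cs S = {r. (\<forall>z\<in>S. sc r z = 0) \<and> sc r e = u}" for S
  define Bs where "Bs S = {r. (\<forall>z\<in>S. sc r z = 0) \<and> sc r e = 0}" for S
  define Ds where "Ds S n = msum (Bs S) (?Q n)" for S n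
  have ne: "\<exists>r. r \<in> Cs S" if S: "finite S" "S \<subseteq> M" for S
  proof -
    have "\<exists>r. (\<forall>z\<in>S. sc r z = 0) \<and> sc r e \<noteq> 0"
    proof (rule ccontr)
      assume "\<not> ?thesis"
      then have "\<forall>r. (\<forall>z\<in>S. sc r z = 0) \<longrightarrow> sc r e = 0" by blast
      then obtain c where c: "e = (\<Sum>z\<in>S. sc (c z) z)" using fg[OF S(1)] by blast
      have "(\<Sum>z\<in>S. sc (c z) z) \<in> M"
        by (rule submod_sum[OF M]) (use S M in \<open>auto simp: submod_def\<close>)
      then show False using c e by simp
    qed
    then obtain r where r: "\<forall>z\<in>S. sc r z = 0" "sc r e \<noteq> 0" by blast
    have "range (\<lambda>t. sc t (sc r e)) \<noteq> {0}" using in_cyc_self[of "sc r e"] r(2) by blast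
    then have "u \<in> range (\<lambda>t. sc t (sc r e))" using u_in[OF cyc_submod] by blast
    then obtain s where s: "u = sc s (sc r e)" by blast
    have "\<forall>z\<in>S. sc (s * r) z = 0" using r(1) by (simp flip: M.scale_scale)
    moreover have "sc (s * r) e = u" using s by simp
    ultimately show ?thesis unfolding Cs_def by blast
  qed
  have Bsi: "is_ideal (Bs S)" for S
    unfolding is_ideal_def Bs_def
  proof (intro conjI allI ballI impI)
    show "0 \<in> {r. (\<forall>z\<in>S. sc r z = 0) \<and> sc r e = 0}" by simp
  next
    fix a b assume "a \<in> {r. (\<forall>z\<in>S. sc r z = 0) \<and> sc r e = 0}" "b \<in> {r. (\<forall>z\<in>S. sc r z = 0) \<and> sc r e = 0}"
    then show "a + b \<in> {r. (\<forall>z\<in>S. sc r z = 0) \<and> sc r e = 0}" by (simp add: M.scale_left_distrib)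
  next
    fix t a assume "a \<in> {r. (\<forall>z\<in>S. sc r z = 0) \<and> sc r e = 0}"
    then show "t * a \<in> {r. (\<forall>z\<in>S. sc r z = 0) \<and> sc r e = 0}" by (simp flip: M.scale_scale)
  qed
  have sQ: "submod (*) (?Q n)" for n using ideal_pow_ideal is_ideal_submod by blast
  have sD: "submod (*) (Ds S n)" for S n
    unfolding Ds_def using submod_msum[OF module_mult] Bsi is_ideal_submod sQ by blast
  have QD: "?Q n \<subseteq> Ds S n" for S n
    unfolding Ds_def using msum_ge2[of "(*)" "Bs S"] Bsi is_ideal_submod by blast
  have Bs_anti: "S \<subseteq> S' \<Longrightarrow> Bs S' \<subseteq> Bs S" for S S' unfolding Bs_def by blast
  have Cs_anti: "S \<subseteq> S' \<Longrightarrow> Cs S' \<subseteq> Cs S" for S S' unfolding Cs_def by blast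
  have Ds_anti: "S \<subseteq> S' \<Longrightarrow> Ds S' n \<subseteq> Ds S n" for S S' n
    unfolding Ds_def msum_def using Bs_anti by blast
  have shift: "msum (Cs S) (?Q n) = {r0 + d | d. d \<in> Ds S n}" if r0: "r0 \<in> Cs S" for S n r0
  proof
    show "msum (Cs S) (?Q n) \<subseteq> {r0 + d | d. d \<in> Ds S n}"
    proof
      fix w assume "w \<in> msum (Cs S) (?Q n)"
      then obtain c q where cq: "w = c + q" "c \<in> Cs S" "q \<in> ?Q n" unfolding msum_def by blast
      have "c - r0 \<in> Bs S" using cq(2) r0 unfolding Cs_def Bs_def by (simp add: M.scale_left_diff_distrib)
      then have "(c - r0) + q \<in> Ds S n" using cq(3) unfolding Ds_def msum_def by blast
      moreover have "w = r0 + ((c - r0) + q)" using cq by simp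
      ultimately show "w \<in> {r0 + d | d. d \<in> Ds S n}" by blast
    qed
  next
    show "{r0 + d | d. d \<in> Ds S n} \<subseteq> msum (Cs S) (?Q n)"
    proof
      fix w assume "w \<in> {r0 + d | d. d \<in> Ds S n}"
      then obtain b q where bq: "w = r0 + (b + q)" "b \<in> Bs S" "q \<in> ?Q n" unfolding Ds_def msum_def by blast
      have "r0 + b \<in> Cs S" using bq(2) r0 unfolding Cs_def Bs_def by (simp add: M.scale_left_distrib)
      moreover have "w = (r0 + b) + q" using bq by (simp add: algebra_simps)
      ultimately show "w \<in> msum (Cs S) (?Q n)" using bq(3) unfolding msum_def by blast
    qed
  qed
  have stab: "\<exists>S0. finite S0 \<and> S0 \<subseteq> M \<and> (\<forall>S. finite S \<and> S0 \<subseteq> S \<and> S \<subseteq> M \<longrightarrow> Ds S n = Ds S0 n)" for n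
  proof -
    obtain p where p: "bnd (*) (?Q n) UNIV p" using fin_len by blast
    have sU: "submod (*) (UNIV :: 'a set)" using is_ideal_UNIV is_ideal_submod by blast
    have bD: "bnd (*) (?Q n) (Ds S n) p" for S using bnd_sub[OF p sQ sU] by blast
    define f where "f S = len (*) (?Q n) (Ds S n)" for S
    have "\<exists>S0. (finite S0 \<and> S0 \<subseteq> M) \<and> (\<forall>S. finite S \<and> S \<subseteq> M \<longrightarrow> f S0 \<le> f S)"
      using ex_has_least_nat[of "\<lambda>S. finite S \<and> S \<subseteq> M" "{}" f] by simp
    then obtain S0 where S0: "finite S0" "S0 \<subseteq> M" "\<forall>S. finite S \<and> S \<subseteq> M \<longrightarrow> f S0 \<le> f S" by blast
    have "Ds S n = Ds S0 n" if S: "finite S" "S0 \<subseteq> S" "S \<subseteq> M" for S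
    proof (rule ccontr)
      assume "Ds S n \<noteq> Ds S0 n"
      then have "Ds S n \<subset> Ds S0 n" using Ds_anti[OF S(2)] by blast
      then have "f S < f S0" unfolding f_def using len_strict[OF bD sQ sD sD QD] by blast
      then show False using S0(3) S by fastforce
    qed
    then show ?thesis using S0 by blast
  qed
  then obtain Sn where Sn: "\<And>n. finite (Sn n)" "\<And>n. Sn n \<subseteq> M"
    "\<And>n S. finite S \<Longrightarrow> Sn n \<subseteq> S \<Longrightarrow> S \<subseteq> M \<Longrightarrow> Ds S n = Ds (Sn n) n"
    by metis
  define T where "T n = (\<Union>i\<le>n. Sn i)" for n
  have Tf: "finite (T n)" for n unfolding T_def using Sn(1) by simp
  have TM: "T n \<subseteq> M" for n unfolding T_def using Sn(2) by blast
  have ST: "Sn n \<subseteq> T n" for n unfolding T_def by blast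
  have Tmono: "n \<le> n' \<Longrightarrow> T n \<subseteq> T n'" for n n' unfolding T_def by (intro UN_mono) auto
  define \<Gamma> where "\<Gamma> n = msum (Cs (T n)) (?Q n)" for n
  have Pg: "msum (Cs S) (?Q n) = \<Gamma> n" if S: "finite S" "T n \<subseteq> S" "S \<subseteq> M" for S n
  proof -
    obtain r0 where r0: "r0 \<in> Cs S" using ne[OF S(1,3)] by blast
    have r0': "r0 \<in> Cs (T n)" using Cs_anti[OF S(2)] r0 by blast
    have "Ds S n = Ds (Sn n) n" using Sn(3)[OF S(1) _ S(3)] ST S(2) by blast
    moreover have "Ds (T n) n = Ds (Sn n) n" using Sn(3)[OF Tf ST TM] .
    ultimately have "Ds S n = Ds (T n) n" by simp
    then show ?thesis unfolding \<Gamma>_def using shift[OF r0] shift[OF r0'] by simp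
  qed
  have step_ex: "\<exists>r. r \<in> \<Gamma> (Suc n) \<and> r - w \<in> ?Q n" if w: "w \<in> \<Gamma> n" for w n
  proof -
    have "\<Gamma> n = msum (Cs (T (Suc n))) (?Q n)" using Pg[OF Tf Tmono TM, of n "Suc n"] by simp
    then obtain c q where cq: "w = c + q" "c \<in> Cs (T (Suc n))" "q \<in> ?Q n" using w unfolding msum_def by blast
    have "c + 0 \<in> \<Gamma> (Suc n)" using cq(2) ideal_0[OF ideal_pow_ideal] unfolding \<Gamma>_def msum_def by blast
    moreover have "c - w = - q" using cq by simp
    moreover have "- q \<in> ?Q n" using ideal_uminus[OF ideal_pow_ideal cq(3)] .
    ultimately show ?thesis by auto
  qed
  have G0: "\<exists>r. r \<in> \<Gamma> 0"
  proof -
    obtain r0 where "r0 \<in> Cs (T 0)" using ne[OF Tf TM] by blast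
    then have "r0 + 0 \<in> \<Gamma> 0" using ideal_0[OF ideal_pow_ideal] unfolding \<Gamma>_def msum_def by blast
    then show ?thesis by blast
  qed
  define xs where "xs = rec_nat (SOME r. r \<in> \<Gamma> 0) (\<lambda>n w. SOME r. r \<in> \<Gamma> (Suc n) \<and> r - w \<in> ?Q n)"
  have xs0: "xs 0 = (SOME r. r \<in> \<Gamma> 0)" unfolding xs_def by simp
  have xsS: "xs (Suc n) = (SOME r. r \<in> \<Gamma> (Suc n) \<and> r - xs n \<in> ?Q n)" for n unfolding xs_def by simp
  have inv: "xs n \<in> \<Gamma> n" for n
  proof (induction n)
    case 0 then show ?case using xs0 someI_ex[OF G0] by simp
  next
    case (Suc n)
    from someI_ex[OF step_ex[OF Suc]] show ?case using xsS by simp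
  qed
  have dif: "xs (Suc n) - xs n \<in> ?Q n" for n
    using someI_ex[OF step_ex[OF inv[of n]]] xsS by simp
  have cauchy: "xs n' - xs n \<in> ?Q n" if "n \<le> n'" for n n'
    using that
  proof (induction n' rule: dec_induct)
    case base then show ?case using ideal_0[OF ideal_pow_ideal] by simp
  next
    case (step k)
    have "xs (Suc k) - xs k \<in> ?Q n" using dif[of k] ideal_pow_anti[OF m_ideal step(1)] by blast
    then have "(xs (Suc k) - xs k) + (xs k - xs n) \<in> ?Q n" using step(3) ideal_add[OF ideal_pow_ideal] by blast
    then show ?case by simp
  qed
  have "\<forall>k. \<exists>N. \<forall>n\<ge>N. \<forall>n'\<ge>N. xs n - xs n' \<in> ?Q k"
  proof
    fix k :: nat
    show "\<exists>N. \<forall>n\<ge>N. \<forall>n'\<ge>N. xs n - xs n' \<in> ?Q k"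
    proof (intro exI[of _ k] allI impI)
      fix n n' :: nat assume h: "k \<le> n" "k \<le> n'"
      show "xs n - xs n' \<in> ?Q k"
      proof (cases "n \<le> n'")
        case True
        then have "xs n' - xs n \<in> ?Q k" using cauchy ideal_pow_anti[OF m_ideal h(1)] by blast
        then have "- (xs n' - xs n) \<in> ?Q k" by (rule ideal_uminus[OF ideal_pow_ideal])
        then show ?thesis by simp
      next
        case False
        then have "n' \<le> n" by simp
        then have "xs n - xs n' \<in> ?Q n'" by (rule cauchy)
        then show ?thesis using ideal_pow_anti[OF m_ideal h(2)] by blast
      qed
    qed
  qed
  then obtain y where y: "\<forall>k. \<exists>N. \<forall>n\<ge>N. xs n - y \<in> ?Q k" using compl unfolding madic_complete_def by blast
  have key: "sc y z = 0 \<and> sc y e = u" if z: "z \<in> M" for z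
  proof -
    obtain Kz where Kz: "\<forall>q\<in>?Q Kz. sc q z = 0" using torsion by blast
    obtain Ke where Ke: "\<forall>q\<in>?Q Ke. sc q e = 0" using torsion by blast
    define K where "K = max Kz Ke"
    obtain N where N: "\<forall>n\<ge>N. xs n - y \<in> ?Q K" using y by blast
    define n where "n = max N K"
    have h1: "T n \<union> {z} \<subseteq> M" using TM z by blast
    have h2: "finite (T n \<union> {z})" using Tf by simp
    have h3: "T n \<subseteq> T n \<union> {z}" by blast
    have "msum (Cs (T n \<union> {z})) (?Q n) = \<Gamma> n" by (rule Pg[OF h2 h3 h1])
    then have "xs n \<in> msum (Cs (T n \<union> {z})) (?Q n)" using inv by simp
    then obtain c q where cq: "xs n = c + q" "c \<in> Cs (T n \<union> {z})" "q \<in> ?Q n" unfolding msum_def by blast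
    have qK: "q \<in> ?Q K" using cq(3) ideal_pow_anti[OF m_ideal, of K n] unfolding n_def by auto
    have dK: "xs n - y \<in> ?Q K" using N unfolding n_def by simp
    define q' where "q' = q - (xs n - y)"
    have q'K: "q' \<in> ?Q K" unfolding q'_def using ideal_diff[OF ideal_pow_ideal qK dK] .
    have yeq: "y = c + q'" unfolding q'_def using cq(1) by (simp add: algebra_simps)
    have "q' \<in> ?Q Kz" using q'K ideal_pow_anti[OF m_ideal, of Kz K] unfolding K_def by auto
    then have "sc q' z = 0" using Kz by blast
    moreover have "q' \<in> ?Q Ke" using q'K ideal_pow_anti[OF m_ideal, of Ke K] unfolding K_def by auto
    then have "sc q' e = 0" using Ke by blast
    moreover have "sc c z = 0" "sc c e = u" using cq(2) unfolding Cs_def by auto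
    ultimately show ?thesis using yeq by (simp add: M.scale_left_distrib)
  qed
  have "0 \<in> M" using M unfolding submod_def by blast
  then have "sc y e = u" using key by blast
  then show ?thesis using key u_ne by blast
qed

end

lemma image_ideal:
  assumes q: "quotient_map \<pi> I" and J: "is_ideal J"
  shows "is_ideal (\<pi> ` J)"
  unfolding is_ideal_def
proof (intro conjI ballI allI impI)
  have "\<pi> 0 = \<pi> 0 + \<pi> 0" using q unfolding quotient_map_def by (metis add_0)
  then have "\<pi> 0 = 0" by simp
  then show "0 \<in> \<pi> ` J" using ideal_0[OF J] by (metis image_eqI)
next
  fix x y assume "x \<in> \<pi> ` J" "y \<in> \<pi> ` J"
  then obtain a b where "x = \<pi> a" "y = \<pi> b" "a \<in> J" "b \<in> J" by blast
  moreover have "\<pi> (a + b) = \<pi> a + \<pi> b" using q unfolding quotient_map_def by blast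
  moreover have "a + b \<in> J" using calculation ideal_add[OF J] by blast
  ultimately show "x + y \<in> \<pi> ` J" by (metis image_eqI)
next
  fix s x assume "x \<in> \<pi> ` J"
  then obtain a where a: "x = \<pi> a" "a \<in> J" by blast
  obtain r where r: "\<pi> r = s" using q unfolding quotient_map_def by (metis surjD)
  have "\<pi> (r * a) = \<pi> r * \<pi> a" using q unfolding quotient_map_def by blast
  moreover have "r * a \<in> J" using a ideal_mult[OF J] by blast
  ultimately show "s * x \<in> \<pi> ` J" using a r by (metis image_eqI)
qed

locale skew =
  fixes p :: nat and \<pi> :: "'a::comm_ring_1 \<Rightarrow> 's::comm_ring_1" and sc :: "'a \<Rightarrow> 'e::ab_group_add \<Rightarrow> 'e"
    and I :: "'a set" and T :: "'e \<Rightarrow> 'e"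
  assumes md: "module sc" and qm: "quotient_map \<pi> I" and Ii: "is_ideal I"
    and frob: "frob_structure p sc I T" and ppos: "p > 0"
begin

sublocale M: module sc by (rule md)

lemma pi_add: "\<pi> (a + b) = \<pi> a + \<pi> b" using qm unfolding quotient_map_def by blast
lemma pi_mult: "\<pi> (a * b) = \<pi> a * \<pi> b" using qm unfolding quotient_map_def by blast
lemma pi_zero: "\<pi> 0 = 0" using pi_add[of 0 0] by simp
lemma pi_diff: "\<pi> (a - b) = \<pi> a - \<pi> b" using pi_add[of "a - b" b] by (simp add: algebra_simps)
lemma pi_pow: "\<pi> (a ^ k) = \<pi> a ^ k"
proof (induction k)
  case 0 then show ?case using qm unfolding quotient_map_def by simp
next
  case (Suc k) then show ?case using pi_mult by simp
qed
lemma pi_surj: "\<exists>r. \<pi> r = s" using qm unfolding quotient_map_def by (metis surjD)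
lemma pi_ker: "\<pi> r = 0 \<longleftrightarrow> r \<in> I" using qm unfolding quotient_map_def by blast

lemma ES_mem: "e \<in> ES sc I \<longleftrightarrow> (\<forall>j\<in>I. sc j e = 0)" unfolding ES_def annE_def by simp

lemma ES_submod: "submod sc (ES sc I)"
  unfolding submod_def ES_def annE_def
proof (intro conjI ballI allI)
  show "0 \<in> {e. \<forall>j\<in>I. sc j e = 0}" by simp
next
  fix x y assume "x \<in> {e. \<forall>j\<in>I. sc j e = 0}" "y \<in> {e. \<forall>j\<in>I. sc j e = 0}"
  then show "x + y \<in> {e. \<forall>j\<in>I. sc j e = 0}" by (simp add: M.scale_right_distrib)
next
  fix r x assume "x \<in> {e. \<forall>j\<in>I. sc j e = 0}"
  then have hx: "\<forall>j\<in>I. sc j x = 0" by simp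
  have "sc j (sc r x) = 0" if "j \<in> I" for j
  proof -
    have "sc j (sc r x) = sc r (sc j x)" by (rule M.scale_left_commute)
    then show ?thesis using that hx by simp
  qed
  then have "\<forall>j\<in>I. sc j (sc r x) = 0" by blast
  then show "sc r x \<in> {e. \<forall>j\<in>I. sc j e = 0}" by simp
qed

lemma ES_0: "0 \<in> ES sc I" using ES_submod unfolding submod_def by blast

lemma sc_cong: "\<pi> r = \<pi> r' \<Longrightarrow> e \<in> ES sc I \<Longrightarrow> sc r e = sc r' e"
proof -
  assume h: "\<pi> r = \<pi> r'" "e \<in> ES sc I"
  then have "\<pi> (r - r') = 0" using pi_diff[of r r'] by simp
  then have "r - r' \<in> I" using pi_ker by blast
  then have "sc (r - r') e = 0" using h(2) ES_mem by blast
  then show ?thesis by (simp add: M.scale_left_diff_distrib)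
qed

lemma sact_pi: "e \<in> ES sc I \<Longrightarrow> sactS \<pi> sc (\<pi> r) e = sc r e"
proof -
  assume e: "e \<in> ES sc I"
  have "\<pi> (SOME r'. \<pi> r' = \<pi> r) = \<pi> r" by (rule someI_ex) blast
  then show ?thesis unfolding sactS_def using sc_cong[OF _ e] by blast
qed

lemma T_ES: "e \<in> ES sc I \<Longrightarrow> T e \<in> ES sc I" using frob unfolding frob_structure_def by blast
lemma T_add: "x \<in> ES sc I \<Longrightarrow> y \<in> ES sc I \<Longrightarrow> T (x + y) = T x + T y" using frob unfolding frob_structure_def by blast
lemma T_sc: "e \<in> ES sc I \<Longrightarrow> T (sc r e) = sc (r ^ p) (T e)" using frob unfolding frob_structure_def by blast
lemma T_0: "T 0 = 0" using T_add[OF ES_0 ES_0] by simp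

lemma Tp_ES: "e \<in> ES sc I \<Longrightarrow> (T ^^ i) e \<in> ES sc I"
  by (induction i) (simp_all add: T_ES)

lemma Tp_0: "(T ^^ i) 0 = 0"
  by (induction i) (simp_all add: T_0)

lemma Tp_sc: "e \<in> ES sc I \<Longrightarrow> (T ^^ i) (sc r e) = sc (r ^ (p ^ i)) ((T ^^ i) e)"
proof (induction i)
  case 0 then show ?case by simp
next
  case (Suc i)
  have "(T ^^ Suc i) (sc r e) = T (sc (r ^ (p ^ i)) ((T ^^ i) e))" using Suc by simp
  also have "\<dots> = sc ((r ^ (p ^ i)) ^ p) (T ((T ^^ i) e))" using T_sc Tp_ES[OF Suc.prems] by blast
  also have "(r ^ (p ^ i)) ^ p = r ^ (p ^ Suc i)" by (simp add: power_mult[symmetric] mult.commute)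
  finally show ?case by simp
qed

lemma Tp_add: "(T ^^ (i + j)) e = (T ^^ i) ((T ^^ j) e)"
  by (simp add: funpow_add)

definition Kr :: "nat \<Rightarrow> 'e set \<Rightarrow> 'a set" where
  "Kr i M = {r. \<forall>e\<in>M. sc r ((T ^^ i) e) = 0}"

definition K :: "nat \<Rightarrow> 'e set \<Rightarrow> 's set" where
  "K i M = {s. \<forall>e\<in>M. sactS \<pi> sc s ((T ^^ i) e) = 0}"

lemma Kr_ideal: "is_ideal (Kr i M)"
  unfolding is_ideal_def Kr_def
proof (intro conjI ballI allI impI)
  show "0 \<in> {r. \<forall>e\<in>M. sc r ((T ^^ i) e) = 0}" by simp
next
  fix x y assume "x \<in> {r. \<forall>e\<in>M. sc r ((T ^^ i) e) = 0}" "y \<in> {r. \<forall>e\<in>M. sc r ((T ^^ i) e) = 0}"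
  then show "x + y \<in> {r. \<forall>e\<in>M. sc r ((T ^^ i) e) = 0}" by (simp add: M.scale_left_distrib)
next
  fix r x assume "x \<in> {r. \<forall>e\<in>M. sc r ((T ^^ i) e) = 0}"
  then show "r * x \<in> {r. \<forall>e\<in>M. sc r ((T ^^ i) e) = 0}" by (simp flip: M.scale_scale)
qed

lemma memK:
  assumes M: "M \<subseteq> ES sc I"
  shows "\<pi> r \<in> K i M \<longleftrightarrow> r \<in> Kr i M"
proof -
  have "sactS \<pi> sc (\<pi> r) ((T ^^ i) e) = sc r ((T ^^ i) e)" if "e \<in> M" for e
    by (rule sact_pi[OF Tp_ES]) (use M that in blast)
  then show ?thesis unfolding K_def Kr_def by simp
qed

lemma K_eq: "M \<subseteq> ES sc I \<Longrightarrow> K i M = \<pi> ` Kr i M"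
proof
  assume M: "M \<subseteq> ES sc I"
  show "K i M \<subseteq> \<pi> ` Kr i M"
  proof
    fix s assume s: "s \<in> K i M"
    obtain r where r: "\<pi> r = s" using pi_surj by blast
    then have "r \<in> Kr i M" using memK[OF M] s by blast
    then show "s \<in> \<pi> ` Kr i M" using r by blast
  qed
  show "\<pi> ` Kr i M \<subseteq> K i M" using memK[OF M] by blast
qed

lemma K_ideal: "M \<subseteq> ES sc I \<Longrightarrow> is_ideal (K i M)"
  using K_eq image_ideal[OF qm Kr_ideal] by simp

lemma skew_Tpow: "skew_submod sc I T M \<Longrightarrow> e \<in> M \<Longrightarrow> (T ^^ k) e \<in> M"
  unfolding skew_submod_def by (induction k) auto

lemma K_mono:
  assumes M: "skew_submod sc I T M" and ij: "i \<le> n" and a: "a \<in> K i M"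
  shows "a \<in> K n M"
proof -
  have MES: "M \<subseteq> ES sc I" using M unfolding skew_submod_def by blast
  obtain r where r: "\<pi> r = a" using pi_surj by blast
  then have "r \<in> Kr i M" using memK[OF MES] a by blast
  have "r \<in> Kr n M"
    unfolding Kr_def
  proof (intro CollectI ballI)
    fix e assume e: "e \<in> M"
    have "n = i + (n - i)" using ij by simp
    then have "(T ^^ n) e = (T ^^ i) ((T ^^ (n - i)) e)" by (metis Tp_add)
    moreover have "(T ^^ (n - i)) e \<in> M" using skew_Tpow[OF M e] .
    ultimately show "sc r ((T ^^ n) e) = 0" using \<open>r \<in> Kr i M\<close> unfolding Kr_def by simp
  qed
  then show ?thesis using memK[OF MES] r by blast
qed

lemma K_shift:
  assumes M: "skew_submod sc I T M" and a: "a \<in> K j M"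
  shows "c * a ^ (p ^ i) \<in> K (j + i) M"
proof -
  have MES: "M \<subseteq> ES sc I" using M unfolding skew_submod_def by blast
  obtain ra where ra: "\<pi> ra = a" using pi_surj by blast
  obtain rc where rc: "\<pi> rc = c" using pi_surj by blast
  have raK: "ra \<in> Kr j M" using memK[OF MES] a ra by blast
  have "rc * ra ^ (p ^ i) \<in> Kr (j + i) M"
    unfolding Kr_def
  proof (intro CollectI ballI)
    fix e assume e: "e \<in> M"
    have eES: "(T ^^ j) e \<in> ES sc I" using Tp_ES MES e by blast
    have "(T ^^ (j + i)) e = (T ^^ i) ((T ^^ j) e)" by (metis Tp_add add.commute)
    then have "sc (ra ^ (p ^ i)) ((T ^^ (j + i)) e) = (T ^^ i) (sc ra ((T ^^ j) e))"
      using Tp_sc[OF eES] by simp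
    also have "\<dots> = 0" using raK e Tp_0 unfolding Kr_def by simp
    finally show "sc (rc * ra ^ (p ^ i)) ((T ^^ (j + i)) e) = 0" by (simp flip: M.scale_scale)
  qed
  moreover have "\<pi> (rc * ra ^ (p ^ i)) = c * a ^ (p ^ i)" using pi_mult pi_pow ra rc by simp
  ultimately show ?thesis using memK[OF MES] by metis
qed

definition Astar :: "'e set \<Rightarrow> (nat \<Rightarrow> 's) set" where
  "Astar M = {f. skew_elt f \<and> (\<forall>i. f i \<in> K i M)}"

lemma skew_elt_bound: "skew_elt f \<Longrightarrow> \<exists>N. \<forall>i>N. f i = 0"
  unfolding skew_elt_def by (metis (mono_tags) finite_nat_set_iff_bounded_le le_less_linear mem_Collect_eq not_le)

lemma skew_elt_boundI: "\<forall>i>N. f i = 0 \<Longrightarrow> skew_elt f"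
  unfolding skew_elt_def by (rule finite_subset[of _ "{..N}"]) (auto simp: not_le[symmetric])

lemma skew_mult_elt:
  assumes f: "skew_elt f" and g: "skew_elt g"
  shows "skew_elt (skew_mult p f g)"
proof -
  obtain N1 where N1: "\<forall>i>N1. f i = 0" using skew_elt_bound[OF f] by blast
  obtain N2 where N2: "\<forall>i>N2. g i = 0" using skew_elt_bound[OF g] by blast
  have "\<forall>n>N1 + N2. skew_mult p f g n = 0"
  proof (intro allI impI)
    fix n assume n: "n > N1 + N2"
    have "f i * g (n - i) ^ (p ^ i) = 0" if "i \<le> n" for i
    proof (cases "i > N1")
      case True then show ?thesis using N1 by simp
    next
      case False
      then have "n - i > N2" using n that by simp
      then have "g (n - i) = 0" using N2 by simp
      moreover have "p ^ i > 0" using ppos by simp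
      ultimately show ?thesis by (simp add: zero_power)
    qed
    then show "skew_mult p f g n = 0" unfolding skew_mult_def by simp
  qed
  then show ?thesis by (rule skew_elt_boundI)
qed

lemma single_elt: "skew_elt (\<lambda>j. if j = i then s else 0)"
  by (rule skew_elt_boundI[of i]) simp

lemma Astar_graded:
  assumes M: "skew_submod sc I T M"
  shows "graded_two_sided_ideal p (Astar M)"
proof -
  have MES: "M \<subseteq> ES sc I" using M unfolding skew_submod_def by blast
  have Ki: "\<And>i. is_ideal (K i M)" using K_ideal[OF MES] .
  have "skew_two_sided_ideal p (Astar M)"
    unfolding skew_two_sided_ideal_def
  proof (intro conjI ballI allI impI)
    show "\<And>f. f \<in> Astar M \<Longrightarrow> skew_elt f" unfolding Astar_def by blast
  next
    show "(\<lambda>_. 0) \<in> Astar M" unfolding Astar_def skew_elt_def using ideal_0[OF Ki] by simp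
  next
    fix f g assume f: "f \<in> Astar M" and g: "g \<in> Astar M"
    have "{i. f i + g i \<noteq> 0} \<subseteq> {i. f i \<noteq> 0} \<union> {i. g i \<noteq> 0}" by auto
    then have "skew_elt (\<lambda>i. f i + g i)" using f g unfolding Astar_def skew_elt_def
      by (metis (no_types, lifting) finite_Un finite_subset mem_Collect_eq)
    then show "(\<lambda>i. f i + g i) \<in> Astar M" using f g ideal_add[OF Ki] unfolding Astar_def by simp
  next
    fix f g :: "nat \<Rightarrow> 's" assume f: "f \<in> Astar M" and g: "skew_elt g"
    have fe: "skew_elt f" using f unfolding Astar_def by blast
    have c1: "skew_mult p g f n \<in> K n M" for n
      unfolding skew_mult_def
    proof (rule ideal_sum[OF Ki])
      fix i assume i: "i \<in> {..n}"
      have "f (n - i) \<in> K (n - i) M" using f unfolding Astar_def by blast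
      then have "g i * f (n - i) ^ (p ^ i) \<in> K (n - i + i) M" by (rule K_shift[OF M])
      then show "g i * f (n - i) ^ (p ^ i) \<in> K n M" using i by simp
    qed
    have c2: "skew_mult p f g n \<in> K n M" for n
      unfolding skew_mult_def
    proof (rule ideal_sum[OF Ki])
      fix i assume i: "i \<in> {..n}"
      have "f i \<in> K i M" using f unfolding Astar_def by blast
      then have "f i \<in> K n M" using K_mono[OF M] i by simp
      then show "f i * g (n - i) ^ (p ^ i) \<in> K n M" by (rule ideal_mult2[OF Ki])
    qed
    show "skew_mult p g f \<in> Astar M" unfolding Astar_def using c1 skew_mult_elt[OF g fe] by blast
    show "skew_mult p f g \<in> Astar M" unfolding Astar_def using c2 skew_mult_elt[OF fe g] by blast
  qed
  then show ?thesis unfolding graded_two_sided_ideal_def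
  proof (intro conjI exI[of _ "\<lambda>i. K i M"])
    show "\<forall>i. is_ideal (K i M)" using Ki by blast
    show "Astar M = {f. skew_elt f \<and> (\<forall>i. f i \<in> K i M)}" unfolding Astar_def by simp
  qed
qed

lemma skew_act_zero:
  assumes "\<forall>i. sactS \<pi> sc (f i) ((T ^^ i) e) = 0"
  shows "skew_act \<pi> sc T f e = 0"
  unfolding skew_act_def using assms by simp

lemma Astar_ann:
  assumes M: "skew_submod sc I T M"
  shows "Astar M \<subseteq> skew_ann \<pi> sc T M"
proof
  fix f assume f: "f \<in> Astar M"
  have "\<forall>e\<in>M. skew_act \<pi> sc T f e = 0"
  proof
    fix e assume e: "e \<in> M"
    show "skew_act \<pi> sc T f e = 0"
      by (rule skew_act_zero) (use f e in \<open>auto simp: Astar_def K_def\<close>)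
  qed
  then show "f \<in> skew_ann \<pi> sc T M" using f unfolding skew_ann_def Astar_def by blast
qed

lemma sact_zero: "e \<in> ES sc I \<Longrightarrow> sactS \<pi> sc 0 e = 0"
  using sact_pi[of e 0] pi_zero by simp

lemma Astar_max:
  assumes M: "skew_submod sc I T M" and B: "graded_two_sided_ideal p B" "B \<subseteq> skew_ann \<pi> sc T M"
  shows "B \<subseteq> Astar M"
proof
  have MES: "M \<subseteq> ES sc I" using M unfolding skew_submod_def by blast
  obtain K' where K': "\<forall>i. is_ideal (K' i)" "B = {f. skew_elt f \<and> (\<forall>i. f i \<in> K' i)}"
    using B(1) unfolding graded_two_sided_ideal_def by blast
  fix f assume f: "f \<in> B"
  have "f i \<in> K i M" for i
  proof (cases "f i = 0")
    case True
    then show ?thesis unfolding K_def using sact_zero Tp_ES MES by auto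
  next
    case False
    define g where "g = (\<lambda>j. if j = i then f i else 0)"
    have "g \<in> B" unfolding K'(2) g_def using single_elt f K' ideal_0 by auto
    then have ann: "\<forall>e\<in>M. skew_act \<pi> sc T g e = 0" using B(2) unfolding skew_ann_def by blast
    have supp: "{j. g j \<noteq> 0} = {i}" unfolding g_def using False by auto
    have "\<forall>e\<in>M. sactS \<pi> sc (f i) ((T ^^ i) e) = 0"
    proof
      fix e assume "e \<in> M"
      then have "skew_act \<pi> sc T g e = 0" using ann by blast
      then show "sactS \<pi> sc (f i) ((T ^^ i) e) = 0" unfolding skew_act_def supp by (simp add: g_def)
    qed
    then show ?thesis unfolding K_def by blast
  qed
  moreover have "skew_elt f" using f K' by blast
  ultimately show "f \<in> Astar M" unfolding Astar_def by blast
qed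

lemma grAnn_eq:
  assumes M: "skew_submod sc I T M"
  shows "grAnn p \<pi> sc T M = Astar M"
  unfolding grAnn_def
proof (rule the_equality)
  show "graded_two_sided_ideal p (Astar M) \<and> Astar M \<subseteq> skew_ann \<pi> sc T M \<and>
    (\<forall>B. graded_two_sided_ideal p B \<and> B \<subseteq> skew_ann \<pi> sc T M \<longrightarrow> B \<subseteq> Astar M)"
    using Astar_graded[OF M] Astar_ann[OF M] Astar_max[OF M] by blast
next
  fix A assume A: "graded_two_sided_ideal p A \<and> A \<subseteq> skew_ann \<pi> sc T M \<and>
    (\<forall>B. graded_two_sided_ideal p B \<and> B \<subseteq> skew_ann \<pi> sc T M \<longrightarrow> B \<subseteq> A)"
  have "A \<subseteq> Astar M" using Astar_max[OF M] A by blast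
  moreover have "Astar M \<subseteq> A" using A Astar_graded[OF M] Astar_ann[OF M] by blast
  ultimately show "A = Astar M" by blast
qed

lemma ext_eq:
  assumes M: "skew_submod sc I T M" and L': "is_ideal L'"
  shows "ext_ideal L' = Astar M \<longleftrightarrow> (\<forall>i. K i M = L')"
proof
  have MES: "M \<subseteq> ES sc I" using M unfolding skew_submod_def by blast
  assume eq: "ext_ideal L' = Astar M"
  show "\<forall>i. K i M = L'"
  proof
    fix i
    show "K i M = L'"
    proof
      show "K i M \<subseteq> L'"
      proof
        fix s assume s: "s \<in> K i M"
        have "(\<lambda>j. if j = i then s else 0) \<in> Astar M"
          unfolding Astar_def using single_elt s ideal_0[OF K_ideal[OF MES]] by auto
        then have "(\<lambda>j. if j = i then s else 0) \<in> ext_ideal L'" using eq by simp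
        then have "\<forall>j. (if j = i then s else 0) \<in> L'" unfolding ext_ideal_def by simp
        from this[rule_format, of i] show "s \<in> L'" by simp
      qed
      show "L' \<subseteq> K i M"
      proof
        fix s assume s: "s \<in> L'"
        have "(\<lambda>j. if j = i then s else 0) \<in> ext_ideal L'"
          unfolding ext_ideal_def using single_elt s ideal_0[OF L'] by auto
        then have "(\<lambda>j. if j = i then s else 0) \<in> Astar M" using eq by simp
        then have "\<forall>j. (if j = i then s else 0) \<in> K j M" unfolding Astar_def by simp
        from this[rule_format, of i] show "s \<in> K i M" by simp
      qed
    qed
  qed
next
  assume "\<forall>i. K i M = L'"
  then show "ext_ideal L' = Astar M" unfolding ext_ideal_def Astar_def by simp
qed

end

lemma Tp_inj:
  assumes tf: "T_torsion_free sc I T" and fr: "frob_structure p sc I T"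
  shows "x \<in> ES sc I \<Longrightarrow> (T ^^ i) x = 0 \<Longrightarrow> x = 0"
proof (induction i)
  case 0 then show ?case by simp
next
  case (Suc i)
  have "(T ^^ i) x \<in> ES sc I"
  proof -
    have "\<forall>e\<in>ES sc I. T e \<in> ES sc I" using fr unfolding frob_structure_def by blast
    then show ?thesis using Suc.prems(1) by (induction i) auto
  qed
  moreover have "T ((T ^^ i) x) = 0" using Suc.prems(2) by simp
  ultimately have "(T ^^ i) x = 0" using tf unfolding T_torsion_free_def by blast
  then show ?case using Suc.IH Suc.prems(1) by blast
qed

theorem mainTheorem13:
  fixes p :: nat
    and m I L :: "'a::comm_ring_1 set"
    and sc :: "'a \<Rightarrow> 'e::ab_group_add \<Rightarrow> 'e"
    and \<pi> :: "'a \<Rightarrow> 's::comm_ring_1"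
    and T :: "'e \<Rightarrow> 'e"
  assumes "prime (p::nat)"
    and "of_nat p = (0::'a)"
    and "complete_regular_local_with m"
    and "injective_hull_residue sc m"
    and "is_ideal I"
    and "quotient_map \<pi> I"
    and "frob_structure p sc I T"
    and "T_torsion_free sc I T"
    and "is_ideal L"
    and "I \<subseteq> L"
  shows "ES_ideal sc I T L \<longleftrightarrow> ES_special p \<pi> sc I T (\<pi> ` L)"
proof -
  note pr = assms(1) and crl = assms(3) and ih = assms(4) and Ii = assms(5) and qm = assms(6)
    and fr = assms(7) and tf = assms(8) and Li = assms(9) and IL = assms(10)
  have md: "module sc" and injm: "injective_mod sc"
    using ih unfolding injective_hull_residue_def by blast+
  obtain u where ann_u: "{r. sc r u = 0} = m"
    and ess: "\<forall>N. submod sc N \<and> N \<noteq> {0} \<longrightarrow> N \<inter> range (\<lambda>r. sc r u) \<noteq> {0}"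
    using ih unfolding injective_hull_residue_def by blast
  have loc: "local_ring_with m" and noeth: "noetherian_ring TYPE('a)" and compl: "madic_complete m"
    using crl unfolding complete_regular_local_with_def regular_local_with_def by blast+
  have "chull sc m u"
    unfolding chull_def chull_axioms_def hull_def using md loc noeth injm ann_u ess compl by blast
  then interpret H: chull sc m u .
  have ppos: "p > 0" using pr by (simp add: prime_gt_0_nat)
  have "skew p \<pi> sc I T" unfolding skew_def using md qm Ii fr ppos by blast
  then interpret S: skew p \<pi> sc I T .
  have piL: "is_ideal (\<pi> ` L)" by (rule image_ideal[OF qm Li])
  show ?thesis
  proof
    assume ESI: "ES_ideal sc I T L"
    let ?N = "annES sc I L"
    have N: "skew_submod sc I T ?N" using ESI unfolding ES_ideal_def by blast
    have NES: "?N \<subseteq> ES sc I" unfolding annES_def by blast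
    have memN: "e \<in> ?N \<longleftrightarrow> e \<in> ES sc I \<and> (\<forall>l\<in>L. sc l e = 0)" for e
      unfolding annES_def annE_def by simp
    have KrN: "S.Kr i ?N = L" for i
    proof
      show "L \<subseteq> S.Kr i ?N"
      proof
        fix l assume l: "l \<in> L"
        have "sc l ((T ^^ i) e) = 0" if e: "e \<in> ?N" for e
          using S.skew_Tpow[OF N e, of i] memN l by blast
        then show "l \<in> S.Kr i ?N" unfolding S.Kr_def by blast
      qed
      show "S.Kr i ?N \<subseteq> L"
      proof
        fix r assume r: "r \<in> S.Kr i ?N"
        have "p ^ i = Suc (p ^ i - 1)" using ppos by simp
        then have "r ^ (p ^ i) = r ^ (p ^ i - 1) * r" by (metis power_Suc2)
        then have rp: "r ^ (p ^ i) \<in> S.Kr i ?N" using ideal_mult[OF S.Kr_ideal r] by simp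
        have kill: "sc r e = 0" if e: "e \<in> ?N" for e
        proof -
          have eES: "e \<in> ES sc I" using e NES by blast
          have "sc r e \<in> ES sc I" using S.ES_submod eES unfolding submod_def by blast
          moreover have "(T ^^ i) (sc r e) = 0"
            using S.Tp_sc[OF eES] rp e unfolding S.Kr_def by simp
          ultimately show ?thesis using Tp_inj[OF tf fr] by blast
        qed
        show "r \<in> L"
        proof (rule ccontr)
          assume "r \<notin> L"
          then obtain e0 where e0: "\<forall>l\<in>L. sc l e0 = 0" "sc r e0 = u" using H.ann_sep[OF Li] by blast
          have "e0 \<in> ES sc I" using e0(1) IL unfolding ES_def annE_def by blast
          then have "e0 \<in> ?N" using memN e0(1) by blast
          then have "u = 0" using kill e0(2) by simp
          then show False using H.u_ne by simp
        qed
      qed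
    qed
    have "\<forall>i. S.K i ?N = \<pi> ` L" using S.K_eq[OF NES] KrN by simp
    then have "ext_ideal (\<pi> ` L) = S.Astar ?N" using S.ext_eq[OF N piL] by blast
    then have "ext_ideal (\<pi> ` L) = grAnn p \<pi> sc T ?N" using S.grAnn_eq[OF N] by simp
    then show "ES_special p \<pi> sc I T (\<pi> ` L)" unfolding ES_special_def using piL N by blast
  next
    assume "ES_special p \<pi> sc I T (\<pi> ` L)"
    then obtain M where M: "skew_submod sc I T M" "ext_ideal (\<pi> ` L) = grAnn p \<pi> sc T M"
      unfolding ES_special_def by blast
    have MES: "M \<subseteq> ES sc I" using M(1) unfolding skew_submod_def by blast
    have sM: "submod sc M" using M(1) unfolding skew_submod_def by blast
    have "ext_ideal (\<pi> ` L) = S.Astar M" using M S.grAnn_eq by simp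
    then have K0: "S.K 0 M = \<pi> ` L" using S.ext_eq[OF M(1) piL] by blast
    have Kr0: "S.Kr 0 M = L"
    proof
      show "S.Kr 0 M \<subseteq> L"
      proof
        fix r assume "r \<in> S.Kr 0 M"
        then have "\<pi> r \<in> \<pi> ` L" using S.memK[OF MES] K0 by blast
        then obtain l where l: "l \<in> L" "\<pi> r = \<pi> l" by blast
        then have "\<pi> (r - l) = 0" using S.pi_diff by simp
        then have "r - l \<in> I" using S.pi_ker by blast
        then have "r - l \<in> L" using IL by blast
        then have "(r - l) + l \<in> L" using ideal_add[OF Li _ l(1)] by blast
        then show "r \<in> L" by simp
      qed
      show "L \<subseteq> S.Kr 0 M"
      proof
        fix l assume "l \<in> L"
        then have "\<pi> l \<in> S.K 0 M" using K0 by blast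
        then show "l \<in> S.Kr 0 M" using S.memK[OF MES] by blast
      qed
    qed
    let ?N = "annES sc I L"
    have memN: "e \<in> ?N \<longleftrightarrow> e \<in> ES sc I \<and> (\<forall>l\<in>L. sc l e = 0)" for e
      unfolding annES_def annE_def by simp
    have "?N = M"
    proof
      show "M \<subseteq> ?N"
      proof
        fix e assume e: "e \<in> M"
        have "\<forall>l\<in>L. sc l e = 0" using Kr0 e unfolding S.Kr_def by auto
        then show "e \<in> ?N" using memN MES e by blast
      qed
      show "?N \<subseteq> M"
      proof
        fix e assume e: "e \<in> ?N"
        show "e \<in> M"
        proof (rule ccontr)
          assume "e \<notin> M"
          then obtain r where r: "\<forall>z\<in>M. sc r z = 0" "sc r e \<noteq> 0" using H.matlis[OF sM] by blast
          then have "r \<in> S.Kr 0 M" unfolding S.Kr_def by simp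
          then have "r \<in> L" using Kr0 by simp
          then show False using e memN r(2) by blast
        qed
      qed
    qed
    then show "ES_ideal sc I T L" unfolding ES_ideal_def using Li IL M(1) by simp
  qed
qed

end
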